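(* Let $\mathbf A\in\mathbb R^{n\times n}$. The following are equivalent: (1) $\mathbf A$ has the signature equality property; (2) $\mathbf A$ is eventually SJS, i.e. there is a positive integer $k_0$ such that $\mathbf A^k$ is SJS for all $k\ge k_0$; (3) there is a positive integer $k$ such that both $\mathbf A^k$ and $\mathbf A^{k+1}$ are SJS.
   Context: For $J\subseteq[n]=\{1,\dots,n\}$ with $J^c=[n]\setminus J$, a real matrix $\mathbf B=\{b_{ij}\}$ is strictly $J$-sign-symmetric if $b_{ij}>0$ for $(i,j)\in (J\times J)\cup(J^c\times J^c)$ and $b_{ij}<0$ for $(i,j)\in(J\times J^c)\cup(J^c\times J)$; $\mathbf B$ is SJS if it is strictly $J$-sign-symmetric for some $J\subseteq[n]$. An eigenfunctional of $\mathbf A$ for eigenvalue $\lambda$ is an eigenvector of $\mathbf A^T$ for $\lambda$. For $x\in\mathbb R^n$, $\mathrm{Sign}(x)=(\mathrm{sgn}(x^1),\dots,\mathrm{sgn}(x^n))^T$. $\mathbf A$ has the signature equality property if (i) $\mathbf A$ has a simple positive eigenvalue $\lambda>0$ with $\lambda>|\mu|$ for every other eigenvalue $\mu$ of $\mathbf A$, and (ii) the corresponding eigenvector $x$ and eigenfunctional $x^*$ have no zero coordinates and can be chosen with $\mathrm{Sign}(x)=\mathrm{Sign}(x^* )$. *)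

theory Defs
  imports "Jordan_Normal_Form.Jordan_Normal_Form"
begin

text \<open>Indices are 0-based: [n] is rendered as {0..<n}.\<close>

definition strictly_J_sign_symmetric :: "nat \<Rightarrow> nat set \<Rightarrow> real mat \<Rightarrow> bool" where
  "strictly_J_sign_symmetric n J B \<longleftrightarrow> J \<subseteq> {0..<n} \<and>
     (\<forall>i<n. \<forall>j<n. ((i \<in> J) = (j \<in> J) \<longrightarrow> B $$ (i,j) > 0) \<and>
                   ((i \<in> J) \<noteq> (j \<in> J) \<longrightarrow> B $$ (i,j) < 0))"

definition SJS :: "nat \<Rightarrow> real mat \<Rightarrow> bool" where
  "SJS n B \<longleftrightarrow> (\<exists>J. strictly_J_sign_symmetric n J B)"

definition eventually_SJS :: "nat \<Rightarrow> real mat \<Rightarrow> bool" where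
  "eventually_SJS n A \<longleftrightarrow> (\<exists>k0>0. \<forall>k\<ge>k0. SJS n (A ^\<^sub>m k))"

definition signature_equality :: "nat \<Rightarrow> real mat \<Rightarrow> bool" where
  "signature_equality n A \<longleftrightarrow> (\<exists>lam::real. lam > 0 \<and>
     order lam (char_poly A) = 1 \<and>
     (\<forall>\<mu>. eigenvalue (map_mat complex_of_real A) \<mu> \<and> \<mu> \<noteq> complex_of_real lam
          \<longrightarrow> cmod \<mu> < lam) \<and>
     (\<exists>x y. x \<in> carrier_vec n \<and> y \<in> carrier_vec n \<and>
        A *\<^sub>v x = lam \<cdot>\<^sub>v x \<and> transpose_mat A *\<^sub>v y = lam \<cdot>\<^sub>v y \<and>
        (\<forall>i<n. x $ i \<noteq> 0 \<and> y $ i \<noteq> 0 \<and> sgn (x $ i) = sgn (y $ i))))"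

end

theory Submission imports Defs "Jordan_Normal_Form.Jordan_Normal_Form_Uniqueness" "Jordan_Normal_Form.Spectral_Radius" begin
lemma mult_mat_vec_idx:
  assumes "A \<in> carrier_mat n m" "v \<in> carrier_vec m" "i < n"
  shows "(A *\<^sub>v v) $ i = (\<Sum>j<m. A $$ (i,j) * v $ j)"
  using assms by (auto simp: scalar_prod_def atLeast0LessThan intro!: sum.cong)

lemma smult_pow_mat:
  fixes A :: "'a::comm_ring_1 mat"
  assumes "A \<in> carrier_mat n n"
  shows "(c \<cdot>\<^sub>m A) ^\<^sub>m k = (c ^ k) \<cdot>\<^sub>m (A ^\<^sub>m k)"
proof (induct k)
  case 0 then show ?case by (auto intro!: eq_matI)
next
  case (Suc k)
  have "(c \<cdot>\<^sub>m A) ^\<^sub>m Suc k = ((c ^ k) \<cdot>\<^sub>m (A ^\<^sub>m k)) * (c \<cdot>\<^sub>m A)" using Suc by simp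
  also have "\<dots> = (c ^ k) \<cdot>\<^sub>m (A ^\<^sub>m k * (c \<cdot>\<^sub>m A))"
    by (rule mult_smult_assoc_mat, insert assms, auto)
  also have "\<dots> = (c ^ k) \<cdot>\<^sub>m (c \<cdot>\<^sub>m (A ^\<^sub>m k * A))"
    by (subst mult_smult_distrib, insert assms, auto)
  also have "\<dots> = (c ^ Suc k) \<cdot>\<^sub>m (A ^\<^sub>m Suc k)"
    by (auto intro!: eq_matI simp: mult.commute mult.left_commute)
  finally show ?case .
qed

lemma smult_mat_mult_vec:
  assumes "A \<in> carrier_mat n n" "v \<in> carrier_vec n"
  shows "(c \<cdot>\<^sub>m A) *\<^sub>v v = c \<cdot>\<^sub>v (A *\<^sub>v v)"
  using assms by (intro eq_vecI, auto simp: scalar_prod_def sum_distrib_left mult.assoc)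

lemma growth_bound:
  fixes M :: "complex mat"
  assumes M: "M \<in> carrier_mat n n" and t: "t > 0"
  and ev: "\<And>\<mu>. eigenvalue M \<mu> \<Longrightarrow> cmod \<mu> < t"
  shows "\<exists>C. \<forall>m. norm_bound (M ^\<^sub>m m) (C * t^m)"
proof (cases "n = 0")
  case True
  then show ?thesis using M unfolding norm_bound_def by auto
next
  case False
  hence n: "n > 0" by auto
  define M' where "M' = complex_of_real (1/t) \<cdot>\<^sub>m M"
  have M': "M' \<in> carrier_mat n n" using M unfolding M'_def by auto
  have MM': "M = complex_of_real t \<cdot>\<^sub>m M'" using M t unfolding M'_def
    by (auto intro!: eq_matI simp flip: of_real_mult)
  have ev': "cmod \<mu> < 1" if "eigenvalue M' \<mu>" for \<mu>
  proof -
    from that obtain v where v: "eigenvector M' v \<mu>" unfolding eigenvalue_def by auto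
    hence vc: "v \<in> carrier_vec n" and v0: "v \<noteq> 0\<^sub>v n" and e: "M' *\<^sub>v v = \<mu> \<cdot>\<^sub>v v"
      using M' unfolding eigenvector_def by auto
    have "M *\<^sub>v v = (complex_of_real t * \<mu>) \<cdot>\<^sub>v v"
      unfolding MM' using smult_mat_mult_vec[OF M' vc] e by (simp add: smult_smult_assoc)
    hence "eigenvalue M (complex_of_real t * \<mu>)" using vc v0 M
      unfolding eigenvalue_def eigenvector_def by auto
    from ev[OF this] t show ?thesis by (simp add: norm_mult)
  qed
  have "spectral_radius M' < 1"
  proof -
    from spectral_radius_mem_max(1)[OF M' n] obtain \<mu> where
      "spectral_radius M' = cmod \<mu>" "\<mu> \<in> spectrum M'" by auto
    thus ?thesis using ev' unfolding spectrum_def by auto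
  qed
  from spectral_radius_jnf_norm_bound_less_1_upper_triangular[OF M' this]
  obtain c where c: "\<And>k. norm_bound (M' ^\<^sub>m k) c" by auto
  show ?thesis
  proof (intro exI allI)
    fix m
    have eq: "M ^\<^sub>m m = (complex_of_real t ^ m) \<cdot>\<^sub>m (M' ^\<^sub>m m)"
      unfolding MM' by (rule smult_pow_mat[OF M'])
    show "norm_bound (M ^\<^sub>m m) (c * t ^ m)"
      unfolding norm_bound_def
    proof (intro allI impI)
      fix i j assume "i < dim_row (M ^\<^sub>m m)" "j < dim_col (M ^\<^sub>m m)"
      hence ij: "i < n" "j < n" using pow_carrier_mat[OF M, of m] by auto
      have "norm ((M ^\<^sub>m m) $$ (i,j)) = t ^ m * norm ((M' ^\<^sub>m m) $$ (i,j))"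
        unfolding eq using ij M' t by (simp add: norm_mult norm_power)
      also have "\<dots> \<le> t ^ m * c" using c[of m] ij M' t unfolding norm_bound_def
        by (intro mult_left_mono, auto)
      finally show "norm ((M ^\<^sub>m m) $$ (i,j)) \<le> c * t ^ m" by (simp add: mult.commute)
    qed
  qed
qed

lemma pow_nonneg_entries:
  fixes P :: "real mat"
  assumes P: "P \<in> carrier_mat n n" and nn: "\<And>i j. i < n \<Longrightarrow> j < n \<Longrightarrow> P $$ (i,j) \<ge> 0"
  shows "i < n \<Longrightarrow> j < n \<Longrightarrow> (P ^\<^sub>m m) $$ (i,j) \<ge> 0"
proof (induct m arbitrary: i j)
  case 0 then show ?case using P by auto
next
  case (Suc m)
  have "(P ^\<^sub>m Suc m) $$ (i,j) = (\<Sum>l<n. (P ^\<^sub>m m) $$ (i,l) * P $$ (l,j))"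
    using Suc.prems P pow_carrier_mat[OF P, of m]
    by (auto simp: scalar_prod_def atLeast0LessThan intro!: sum.cong)
  also have "\<dots> \<ge> 0" using Suc nn by (intro sum_nonneg mult_nonneg_nonneg, auto)
  finally show ?case .
qed

lemma real_mat_pow_bound:
  fixes P :: "real mat"
  assumes P: "P \<in> carrier_mat n n" and t: "t > 0"
  and ev: "\<And>\<mu>. eigenvalue (map_mat complex_of_real P) \<mu> \<Longrightarrow> cmod \<mu> < t"
  shows "\<exists>C. \<forall>m i j. i < n \<longrightarrow> j < n \<longrightarrow> \<bar>(P ^\<^sub>m m) $$ (i,j)\<bar> \<le> C * t^m"
proof -
  have Pc: "map_mat complex_of_real P \<in> carrier_mat n n" using P by auto
  from growth_bound[OF Pc t ev] obtain C where
    C: "\<And>m. norm_bound (map_mat complex_of_real P ^\<^sub>m m) (C * t^m)" by auto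
  show ?thesis
  proof (intro exI allI impI)
    fix m i j assume ij: "i < n" "j < n"
    have "map_mat complex_of_real P ^\<^sub>m m = map_mat complex_of_real (P ^\<^sub>m m)"
      by (rule of_real_hom.mat_hom_pow[OF P, symmetric])
    with C[of m] ij pow_carrier_mat[OF P, of m] P
    show "\<bar>(P ^\<^sub>m m) $$ (i,j)\<bar> \<le> C * t^m" unfolding norm_bound_def by auto
  qed
qed
lemma pos_mat_mult_pos:
  fixes P :: "real mat"
  assumes P: "P \<in> carrier_mat n n" and pos: "\<And>i j. i<n \<Longrightarrow> j<n \<Longrightarrow> P$$(i,j) > 0"
  and h: "h \<in> carrier_vec n" and hnn: "\<And>i. i<n \<Longrightarrow> h$i \<ge> 0" and hnz: "i0 < n" "h$i0 \<noteq> 0"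
  and i: "i < n"
  shows "(P *\<^sub>v h) $ i > 0"
proof -
  have "(P *\<^sub>v h) $ i = (\<Sum>j<n. P $$ (i,j) * h $ j)" by (rule mult_mat_vec_idx[OF P h i])
  also have "\<dots> > 0"
  proof (rule sum_pos2[of _ i0])
    show "0 < P $$ (i,i0) * h $ i0" using pos[OF i hnz(1)] hnn[OF hnz(1)] hnz(2) by auto
  qed (insert hnz pos i hnn, auto intro!: mult_nonneg_nonneg simp: less_imp_le)
  finally show ?thesis .
qed

lemma perron_B0:
  fixes P :: "real mat"
  assumes P: "P \<in> carrier_mat n n" and pos: "\<And>i j. i<n \<Longrightarrow> j<n \<Longrightarrow> P$$(i,j) > 0"
  and q: "q \<in> carrier_vec n" and qnn: "\<And>i. i<n \<Longrightarrow> q$i \<ge> 0" and qnz: "i0 < n" "q$i0 \<noteq> 0"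
  and r: "r \<ge> 0" and ge: "\<And>i. i<n \<Longrightarrow> (P *\<^sub>v q)$i \<ge> r * q$i"
  and evb: "\<And>\<mu>. eigenvalue (map_mat complex_of_real P) \<mu> \<Longrightarrow> cmod \<mu> \<le> r"
  shows "P *\<^sub>v q = r \<cdot>\<^sub>v q"
proof (rule ccontr)
  assume neq: "P *\<^sub>v q \<noteq> r \<cdot>\<^sub>v q"
  obtain i1 where i1: "i1 < n" "(P *\<^sub>v q)$i1 \<noteq> r * q$i1"
    using neq q P by (metis (no_types, lifting) carrier_matD(1) carrier_vecD dim_mult_mat_vec
        eq_vecI index_smult_vec(1,2))
  define g where "g = P *\<^sub>v q"
  have g: "g \<in> carrier_vec n" unfolding g_def using P q by auto
  have gpos: "g$i > 0" if "i < n" for i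
    unfolding g_def by (rule pos_mat_mult_pos[OF P pos q qnn qnz that])
  define d where "d = vec n (\<lambda>j. g$j - r * q$j)"
  have d: "d \<in> carrier_vec n" unfolding d_def by auto
  have dnn: "d$i \<ge> 0" if "i < n" for i using ge[OF that] that unfolding d_def g_def by auto
  have dnz: "d$i1 \<noteq> 0" using i1 unfolding d_def g_def by auto
  have gap: "(P *\<^sub>v g)$i - r * g$i > 0" if i: "i < n" for i
  proof -
    have "(P *\<^sub>v g)$i - r * g$i = (\<Sum>j<n. P$$(i,j) * g$j) - r * (\<Sum>j<n. P$$(i,j) * q$j)"
      using mult_mat_vec_idx[OF P g i] mult_mat_vec_idx[OF P q i] unfolding g_def by simp
    also have "\<dots> = (\<Sum>j<n. P$$(i,j) * g$j - r * (P$$(i,j) * q$j))"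
      by (simp add: sum_subtractf sum_distrib_left)
    also have "\<dots> = (\<Sum>j<n. P$$(i,j) * d$j)" unfolding d_def
      by (intro sum.cong, auto simp: algebra_simps)
    also have "\<dots> = (P *\<^sub>v d)$i" using mult_mat_vec_idx[OF P d i] by simp
    also have "\<dots> > 0" by (rule pos_mat_mult_pos[OF P pos d dnn i1(1) dnz i])
    finally show ?thesis .
  qed
  have n: "n > 0" using qnz by auto
  define S where "S = (\<lambda>i. ((P *\<^sub>v g)$i - r * g$i) / g$i) ` {..<n}"
  define \<epsilon> where "\<epsilon> = Min S"
  have Sfin: "finite S" "S \<noteq> {}" unfolding S_def using n by auto
  have eps: "\<epsilon> > 0" unfolding \<epsilon>_def using Min_gr_iff[OF Sfin] gap gpos unfolding S_def by auto
  have Pg: "(P *\<^sub>v g)$i \<ge> (r + \<epsilon>) * g$i" if i: "i < n" for i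
  proof -
    have "\<epsilon> \<le> ((P *\<^sub>v g)$i - r * g$i) / g$i" unfolding \<epsilon>_def S_def
      using Sfin i by (intro Min_le, auto simp: S_def)
    hence "\<epsilon> * g$i \<le> (P *\<^sub>v g)$i - r * g$i" using gpos[OF i] by (simp add: pos_le_divide_eq)
    thus ?thesis by (simp add: algebra_simps)
  qed
  have Pnn: "\<And>i j. i < n \<Longrightarrow> j < n \<Longrightarrow> P $$ (i,j) \<ge> 0" using pos less_imp_le by blast
  have grow: "(P ^\<^sub>m m *\<^sub>v g)$i \<ge> (r + \<epsilon>)^m * g$i" if "i < n" for m i
    using that
  proof (induct m arbitrary: i)
    case 0 then show ?case using g P by simp
  next
    case (Suc m)
    have Pm: "P ^\<^sub>m m \<in> carrier_mat n n" using P by auto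
    have Pg': "P *\<^sub>v g \<in> carrier_vec n" using P g by auto
    have "(P ^\<^sub>m Suc m *\<^sub>v g) = P ^\<^sub>m m *\<^sub>v (P *\<^sub>v g)"
      by (simp, rule assoc_mult_mat_vec[OF Pm P g])
    hence e1: "(P ^\<^sub>m Suc m *\<^sub>v g)$i = (\<Sum>j<n. (P ^\<^sub>m m)$$(i,j) * (P *\<^sub>v g)$j)"
      using mult_mat_vec_idx[OF Pm Pg' Suc.prems] by simp
    have e2: "(\<Sum>j<n. (P ^\<^sub>m m)$$(i,j) * ((r + \<epsilon>) * g$j)) \<le> (\<Sum>j<n. (P ^\<^sub>m m)$$(i,j) * (P *\<^sub>v g)$j)"
      by (intro sum_mono mult_left_mono Pg pow_nonneg_entries[OF P Pnn], insert Suc.prems, auto)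
    have e3: "(\<Sum>j<n. (P ^\<^sub>m m)$$(i,j) * ((r + \<epsilon>) * g$j)) = (r + \<epsilon>) * (P ^\<^sub>m m *\<^sub>v g)$i"
      using mult_mat_vec_idx[OF Pm g Suc.prems] by (simp add: sum_distrib_left algebra_simps)
    have e4: "(r + \<epsilon>) * ((r + \<epsilon>)^m * g$i) \<le> (r + \<epsilon>) * (P ^\<^sub>m m *\<^sub>v g)$i"
      using Suc eps r by (intro mult_left_mono, auto)
    from e1 e2 e3 e4 show ?case by (simp add: algebra_simps)
  qed
  define t where "t = r + \<epsilon>/2"
  have t: "t > 0" unfolding t_def using r eps by auto
  from real_mat_pow_bound[OF P t] evb obtain C where
    C: "\<And>m i j. i < n \<Longrightarrow> j < n \<Longrightarrow> \<bar>(P ^\<^sub>m m) $$ (i,j)\<bar> \<le> C * t^m"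
    unfolding t_def using eps by fastforce
  define G where "G = (\<Sum>j<n. g$j)"
  have upper: "(P ^\<^sub>m m *\<^sub>v g)$i0 \<le> C * t^m * G" for m
  proof -
    have Pm: "P ^\<^sub>m m \<in> carrier_mat n n" using P by auto
    have "(P ^\<^sub>m m *\<^sub>v g)$i0 = (\<Sum>j<n. (P ^\<^sub>m m)$$(i0,j) * g$j)"
      by (rule mult_mat_vec_idx[OF Pm g qnz(1)])
    also have "\<dots> \<le> (\<Sum>j<n. C * t^m * g$j)"
    proof (intro sum_mono)
      fix j assume "j \<in> {..<n}"
      hence j: "j < n" by auto
      have "(P ^\<^sub>m m)$$(i0,j) * g$j \<le> \<bar>(P ^\<^sub>m m)$$(i0,j)\<bar> * g$j"
        using gpos[OF j] by (intro mult_right_mono, auto)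
      also have "\<dots> \<le> C * t^m * g$j" using C[OF qnz(1) j, of m] gpos[OF j]
        by (intro mult_right_mono, auto)
      finally show "(P ^\<^sub>m m)$$(i0,j) * g$j \<le> C * t^m * g$j" .
    qed
    also have "\<dots> = C * t^m * G" unfolding G_def by (simp add: sum_distrib_left)
    finally show ?thesis .
  qed
  have ratio: "(r + \<epsilon>) / t > 1" using t eps r unfolding t_def by (simp add: field_simps)
  from real_arch_pow[OF ratio, of "C * G / g$i0"] obtain m where
    m: "C * G / g$i0 < ((r + \<epsilon>) / t)^m" by auto
  have "(r + \<epsilon>)^m * g$i0 \<le> C * t^m * G" using grow[OF qnz(1), of m] upper[of m] by linarith
  hence "((r + \<epsilon>)/t)^m * g$i0 \<le> C * G" using t by (simp add: power_divide field_simps)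
  hence "((r + \<epsilon>)/t)^m \<le> C * G / g$i0" using gpos[OF qnz(1)] by (simp add: field_simps)
  with m show False by auto
qed
lemma Re_eq_cmod_imp: "Re w = cmod w \<Longrightarrow> w = complex_of_real (cmod w)"
proof -
  assume h: "Re w = cmod w"
  have "(cmod w)^2 = (Re w)^2 + (Im w)^2" by (simp add: cmod_power2)
  with h have "Im w = 0" by simp
  with h show ?thesis by (simp add: complex_eq_iff)
qed

lemma cmod_sum_eq:
  fixes a :: "'b \<Rightarrow> complex"
  assumes fin: "finite I" and eq: "cmod (\<Sum>i\<in>I. a i) = (\<Sum>i\<in>I. cmod (a i))"
    and nz: "(\<Sum>i\<in>I. a i) \<noteq> 0" and i: "i \<in> I"
  shows "a i = complex_of_real (cmod (a i)) * ((\<Sum>i\<in>I. a i) / complex_of_real (cmod (\<Sum>i\<in>I. a i)))"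
proof -
  define S where "S = (\<Sum>i\<in>I. a i)"
  define \<omega> where "\<omega> = cnj S / complex_of_real (cmod S)"
  have cS: "cmod S > 0" using nz unfolding S_def by auto
  have om: "cmod \<omega> = 1" unfolding \<omega>_def using cS by (simp add: norm_divide)
  have le: "Re (\<omega> * a j) \<le> cmod (a j)" for j
    using complex_Re_le_cmod[of "\<omega> * a j"] om by (simp add: norm_mult)
  have cc: "cnj S * S = complex_of_real (cmod S)^2" using complex_norm_square[of S] by (simp add: mult.commute)
  have "(\<Sum>j\<in>I. Re (\<omega> * a j)) = Re (\<omega> * S)" unfolding S_def by (simp add: sum_distrib_left)
  also have "\<omega> * S = complex_of_real (cmod S)" unfolding \<omega>_def using cS cc
    by (simp add: field_simps power2_eq_square)
  finally have sumeq: "(\<Sum>j\<in>I. Re (\<omega> * a j)) = (\<Sum>j\<in>I. cmod (a j))" using eq unfolding S_def by simp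
  have "(\<Sum>j\<in>I. cmod (a j) - Re (\<omega> * a j)) = 0" using sumeq by (simp add: sum_subtractf)
  hence "\<forall>j\<in>I. cmod (a j) - Re (\<omega> * a j) = 0"
    using sum_nonneg_eq_0_iff[OF fin, of "\<lambda>j. cmod (a j) - Re (\<omega> * a j)"] le by auto
  hence "Re (\<omega> * a i) = cmod (\<omega> * a i)" using i om by (simp add: norm_mult)
  hence "\<omega> * a i = complex_of_real (cmod (\<omega> * a i))" by (rule Re_eq_cmod_imp)
  hence w: "\<omega> * a i = complex_of_real (cmod (a i))" using om by (simp add: norm_mult)
  have "S / complex_of_real (cmod S) * \<omega> = 1" unfolding \<omega>_def using cS cc
    by (simp add: field_simps power2_eq_square mult.commute)
  hence "a i = complex_of_real (cmod (a i)) * (S / complex_of_real (cmod S))"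
    using w by (metis mult.assoc mult.commute mult.right_neutral)
  thus ?thesis unfolding S_def .
qed
lemma pos_eigvec_unique:
  fixes P :: "real mat"
  assumes P: "P \<in> carrier_mat n n" and pos: "\<And>i j. i<n \<Longrightarrow> j<n \<Longrightarrow> P$$(i,j) > 0"
  and u: "u \<in> carrier_vec n" "\<And>i. i < n \<Longrightarrow> u$i > 0" "P *\<^sub>v u = \<rho> \<cdot>\<^sub>v u"
  and q: "q \<in> carrier_vec n" "\<And>i. i < n \<Longrightarrow> q$i \<ge> 0" "P *\<^sub>v q = \<rho> \<cdot>\<^sub>v q"
  shows "\<exists>t. q = t \<cdot>\<^sub>v u"
proof (cases "n = 0")
  case True
  then show ?thesis using u q by (intro exI[of _ 0] eq_vecI, auto)
next
  case False
  define S where "S = (\<lambda>i. q$i / u$i) ` {..<n}"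
  define t where "t = Min S"
  have Sfin: "finite S" "S \<noteq> {}" unfolding S_def using False by auto
  from Min_in[OF Sfin] obtain ix where ix: "ix < n" "t = q$ix / u$ix" unfolding t_def S_def by auto
  have tle: "t \<le> q$i / u$i" if "i < n" for i unfolding t_def using that Sfin
    by (intro Min_le, auto simp: S_def)
  define w where "w = vec n (\<lambda>i. q$i - t * u$i)"
  have w: "w \<in> carrier_vec n" unfolding w_def by auto
  have wnn: "w$i \<ge> 0" if "i < n" for i
    using tle[OF that] u(2)[OF that] that unfolding w_def by (simp add: field_simps)
  have wis: "w$ix = 0" using ix u(2)[OF ix(1)] unfolding w_def by simp
  have Pw: "(P *\<^sub>v w)$i = \<rho> * w$i" if i: "i < n" for i
  proof -
    have "(P *\<^sub>v w)$i = (\<Sum>j<n. P$$(i,j) * q$j - t * (P$$(i,j) * u$j))"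
      unfolding mult_mat_vec_idx[OF P w i] unfolding w_def by (intro sum.cong, auto simp: algebra_simps)
    also have "\<dots> = (P *\<^sub>v q)$i - t * (P *\<^sub>v u)$i"
      unfolding mult_mat_vec_idx[OF P q(1) i] mult_mat_vec_idx[OF P u(1) i]
      by (simp add: sum_subtractf sum_distrib_left)
    also have "\<dots> = \<rho> * w$i" using q(3) u(3) i q(1) u(1) unfolding w_def by (simp add: algebra_simps)
    finally show ?thesis .
  qed
  have "\<forall>i<n. w$i = 0"
  proof (rule ccontr)
    assume "\<not> (\<forall>i<n. w$i = 0)"
    then obtain i0 where "i0 < n" "w$i0 \<noteq> 0" by auto
    from pos_mat_mult_pos[OF P pos w wnn this ix(1)] Pw[OF ix(1)] wis show False by simp
  qed
  hence "q = t \<cdot>\<^sub>v u" using q(1) u(1) unfolding w_def by (intro eq_vecI, auto)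
  thus ?thesis by auto
qed

lemma perron_positive:
  fixes P :: "real mat"
  assumes P: "P \<in> carrier_mat n n" and n: "n > 0" and pos: "\<And>i j. i<n \<Longrightarrow> j<n \<Longrightarrow> P$$(i,j) > 0"
  shows "\<exists>\<rho> u. \<rho> > 0 \<and> u \<in> carrier_vec n \<and> (\<forall>i<n. u$i > 0) \<and> P *\<^sub>v u = \<rho> \<cdot>\<^sub>v u \<and>
     (\<forall>\<mu> z. z \<in> carrier_vec n \<longrightarrow> z \<noteq> 0\<^sub>v n \<longrightarrow> map_mat complex_of_real P *\<^sub>v z = \<mu> \<cdot>\<^sub>v z \<longrightarrow>
         cmod \<mu> \<le> \<rho> \<and> (cmod \<mu> = \<rho> \<longrightarrow> \<mu> = complex_of_real \<rho> \<and>
            (\<exists>a. z = a \<cdot>\<^sub>v map_vec complex_of_real u)))"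
proof -
  define Pc where "Pc = map_mat complex_of_real P"
  have Pc: "Pc \<in> carrier_mat n n" unfolding Pc_def using P by auto
  define \<rho> where "\<rho> = spectral_radius Pc"
  have evb: "cmod \<mu> \<le> \<rho>" if "eigenvalue Pc \<mu>" for \<mu>
    unfolding \<rho>_def using that by (intro spectral_radius_mem_max(2)[OF Pc n], auto simp: spectrum_def)
  have rho0: "\<rho> \<ge> 0"
  proof -
    from spectral_radius_mem_max(1)[OF Pc n] show ?thesis unfolding \<rho>_def by auto
  qed
  have evb': "cmod \<mu> \<le> \<rho>" if "z \<in> carrier_vec n" "z \<noteq> 0\<^sub>v n" "Pc *\<^sub>v z = \<mu> \<cdot>\<^sub>v z" for z \<mu>
    using that Pc by (intro evb, auto simp: eigenvalue_def eigenvector_def)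
  have key: "\<rho> > 0 \<and> P *\<^sub>v vec n (\<lambda>j. cmod (z$j)) = \<rho> \<cdot>\<^sub>v vec n (\<lambda>j. cmod (z$j)) \<and>
      (\<forall>i<n. cmod (z$i) > 0) \<and> \<mu> = complex_of_real \<rho> \<and>
      (\<exists>\<sigma>. z = \<sigma> \<cdot>\<^sub>v map_vec complex_of_real (vec n (\<lambda>j. cmod (z$j))))"
    if z: "z \<in> carrier_vec n" "z \<noteq> 0\<^sub>v n" "Pc *\<^sub>v z = \<mu> \<cdot>\<^sub>v z" and mu: "cmod \<mu> = \<rho>" for z \<mu>
  proof -
    define q where "q = vec n (\<lambda>j. cmod (z$j))"
    have q: "q \<in> carrier_vec n" unfolding q_def by auto
    have qnn: "q$i \<ge> 0" if "i < n" for i using that unfolding q_def by auto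
    obtain i0 where i0: "i0 < n" "z$i0 \<noteq> 0" using z(1,2) by (metis carrier_vecD eq_vecI index_zero_vec(1,2))
    have qi0: "q$i0 \<noteq> 0" using i0 unfolding q_def by auto
    have Pcz: "(Pc *\<^sub>v z)$i = (\<Sum>j<n. complex_of_real (P$$(i,j)) * z$j)" if "i < n" for i
      using mult_mat_vec_idx[OF Pc z(1) that] that P unfolding Pc_def by simp
    have Pq: "(P *\<^sub>v q)$i = (\<Sum>j<n. cmod (complex_of_real (P$$(i,j)) * z$j))" if i: "i < n" for i
      unfolding mult_mat_vec_idx[OF P q i] unfolding q_def
      using pos[of i] i by (intro sum.cong, auto simp: norm_mult abs_of_pos)
    have ge: "(P *\<^sub>v q)$i \<ge> \<rho> * q$i" if i: "i < n" for i
    proof -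
      have "\<rho> * q$i = cmod ((Pc *\<^sub>v z)$i)" using z(3) mu i z(1) unfolding q_def by (simp add: norm_mult)
      also have "\<dots> \<le> (P *\<^sub>v q)$i" unfolding Pcz[OF i] Pq[OF i] by (rule norm_sum)
      finally show ?thesis .
    qed
    have eq: "P *\<^sub>v q = \<rho> \<cdot>\<^sub>v q"
      by (rule perron_B0[OF P pos q qnn i0(1) qi0 rho0 ge], insert evb, unfold Pc_def, auto)
    have qpos: "q$i > 0" and rpos: "\<rho> > 0" if i: "i < n" for i
    proof -
      have "(P *\<^sub>v q)$i > 0" by (rule pos_mat_mult_pos[OF P pos q qnn i0(1) qi0 i])
      hence "\<rho> * q$i > 0" using eq i q by simp
      thus "q$i > 0" "\<rho> > 0" using qnn[OF i] rho0 by (auto simp: zero_less_mult_iff)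
    qed
    have rpos: "\<rho> > 0" using rpos[OF i0(1)] .
    define S where "S = (Pc *\<^sub>v z)$0"
    have n0: "0 < n" by (rule n)
    have cS: "cmod S = \<rho> * q$0" unfolding S_def using z(3) z(1) mu n0 unfolding q_def by (simp add: norm_mult)
    have Snz: "S \<noteq> 0" using cS rpos qpos[OF n0] by auto
    have eqs: "cmod (\<Sum>j<n. complex_of_real (P$$(0,j)) * z$j) = (\<Sum>j<n. cmod (complex_of_real (P$$(0,j)) * z$j))"
      using cS eq Pq[OF n0] q n0 unfolding S_def Pcz[OF n0] by simp
    define \<sigma> where "\<sigma> = S / complex_of_real (cmod S)"
    have zj: "z$j = complex_of_real (q$j) * \<sigma>" if j: "j < n" for j
    proof -
      from cmod_sum_eq[of "{..<n}" "\<lambda>j. complex_of_real (P$$(0,j)) * z$j", OF _ eqs _ ] Snz j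
      have "complex_of_real (P$$(0,j)) * z$j = complex_of_real (cmod (complex_of_real (P$$(0,j)) * z$j)) * \<sigma>"
        unfolding \<sigma>_def S_def Pcz[OF n0] by auto
      also have "\<dots> = complex_of_real (P$$(0,j)) * (complex_of_real (q$j) * \<sigma>)"
        using pos[OF n0 j] j unfolding q_def by (simp add: norm_mult)
      finally show ?thesis using pos[OF n0 j] by simp
    qed
    have zq: "z = \<sigma> \<cdot>\<^sub>v map_vec complex_of_real q"
      using z(1) q zj by (intro eq_vecI, auto simp: mult.commute)
    have "(Pc *\<^sub>v z)$0 = \<sigma> * complex_of_real ((P *\<^sub>v q)$0)"
      unfolding Pcz[OF n0] mult_mat_vec_idx[OF P q n0] using zj
      by (simp add: sum_distrib_left algebra_simps)
    also have "\<dots> = \<sigma> * complex_of_real (\<rho> * q$0)" using eq n0 q by simp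
    finally have "\<mu> * z$0 = complex_of_real \<rho> * z$0" using z(3) z(1) n0 zj by simp
    moreover have "z$0 \<noteq> 0" using zj[OF n0] qpos[OF n0] Snz unfolding \<sigma>_def by auto
    ultimately have "\<mu> = complex_of_real \<rho>" by simp
    with rpos eq qpos zq show ?thesis unfolding q_def by auto
  qed
  from spectral_radius_mem_max(1)[OF Pc n] obtain \<mu>0 where
    mu0: "\<rho> = cmod \<mu>0" "eigenvalue Pc \<mu>0" unfolding \<rho>_def spectrum_def by auto
  then obtain z0 where z0: "z0 \<in> carrier_vec n" "z0 \<noteq> 0\<^sub>v n" "Pc *\<^sub>v z0 = \<mu>0 \<cdot>\<^sub>v z0"
    using Pc unfolding eigenvalue_def eigenvector_def by auto
  define u where "u = vec n (\<lambda>j. cmod (z0$j))"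
  from key[OF z0 mu0(1)[symmetric]] have
    rpos: "\<rho> > 0" and Pu: "P *\<^sub>v u = \<rho> \<cdot>\<^sub>v u" and upos: "\<forall>i<n. u$i > 0" unfolding u_def by auto
  have u: "u \<in> carrier_vec n" unfolding u_def by auto
  have rest: "\<forall>\<mu> z. z \<in> carrier_vec n \<longrightarrow> z \<noteq> 0\<^sub>v n \<longrightarrow> map_mat complex_of_real P *\<^sub>v z = \<mu> \<cdot>\<^sub>v z \<longrightarrow>
         cmod \<mu> \<le> \<rho> \<and> (cmod \<mu> = \<rho> \<longrightarrow> \<mu> = complex_of_real \<rho> \<and>
            (\<exists>a. z = a \<cdot>\<^sub>v map_vec complex_of_real u))"
  proof (intro allI impI conjI)
    fix \<mu> z assume z: "z \<in> carrier_vec n" "z \<noteq> 0\<^sub>v n" "map_mat complex_of_real P *\<^sub>v z = \<mu> \<cdot>\<^sub>v z"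
    hence z': "Pc *\<^sub>v z = \<mu> \<cdot>\<^sub>v z" unfolding Pc_def by simp
    show "cmod \<mu> \<le> \<rho>" by (rule evb'[OF z(1,2) z'])
    assume mu: "cmod \<mu> = \<rho>"
    from key[OF z(1,2) z' mu] obtain \<sigma> where
      Pq: "P *\<^sub>v vec n (\<lambda>j. cmod (z$j)) = \<rho> \<cdot>\<^sub>v vec n (\<lambda>j. cmod (z$j))"
      and mueq: "\<mu> = complex_of_real \<rho>"
      and zs: "z = \<sigma> \<cdot>\<^sub>v map_vec complex_of_real (vec n (\<lambda>j. cmod (z$j)))" by auto
    show "\<mu> = complex_of_real \<rho>" by fact
    from pos_eigvec_unique[OF P pos u _ Pu _ _ Pq] upos obtain t where
      t: "vec n (\<lambda>j. cmod (z$j)) = t \<cdot>\<^sub>v u" by auto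
    show "\<exists>a. z = a \<cdot>\<^sub>v map_vec complex_of_real u"
      by (rule exI[of _ "\<sigma> * complex_of_real t"], subst zs, unfold t, insert u, intro eq_vecI, auto)
  qed
  show ?thesis using rpos u upos Pu rest by blast
qed
lemma kernel_dim_le1:
  fixes M :: "'a::field mat"
  assumes M: "M \<in> carrier_mat n n" and x: "x \<in> mat_kernel M"
  and all: "\<And>z. z \<in> mat_kernel M \<Longrightarrow> \<exists>a. z = a \<cdot>\<^sub>v x"
  shows "kernel_dim M \<le> 1"
proof -
  interpret K: kernel n n M by (unfold_locales, rule M)
  have "K.span {x} = mat_kernel M"
  proof (rule equalityI)
    show "K.span {x} \<subseteq> mat_kernel M" using x by (intro K.Ker.span_is_subset2, auto)
    show "mat_kernel M \<subseteq> K.span {x}"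
    proof
      fix z assume "z \<in> mat_kernel M"
      from all[OF this] obtain a where z: "z = a \<cdot>\<^sub>v x" by auto
      have sub: "submodule class_ring (K.span {x}) K.VK" using x by (intro K.Ker.span_is_submodule, auto)
      have xs: "x \<in> K.span {x}" using x K.Ker.in_own_span[of "{x}"] by auto
      from submodule.smult_closed[OF sub _ xs, of a] show "z \<in> K.span {x}" unfolding z
        by (simp add: class_ring_simps)
    qed
  qed
  from K.Ker.dim_le1I[OF this] x have "K.dim \<le> 1" by auto
  thus ?thesis using M by simp
qed

lemma kernel_dim_le1_span:
  fixes M :: "'a::field mat"
  assumes M: "M \<in> carrier_mat n n" and x: "x \<in> mat_kernel M" "x \<noteq> 0\<^sub>v n"
  and v: "v \<in> mat_kernel M" and dim: "kernel_dim M \<le> 1"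
  shows "\<exists>a. v = a \<cdot>\<^sub>v x"
proof -
  interpret K: kernel n n M by (unfold_locales, rule M)
  from kernel_basis_exists[OF M] obtain B where B: "finite B" "K.basis B" by auto
  have fd: "K.Ker.fin_dim" unfolding K.Ker.fin_dim_def using B unfolding K.Ker.basis_def by auto
  have d: "K.dim \<le> 1" using dim M by simp
  have "K.span {} = {0\<^sub>v n}" using K.Ker.span_empty by simp
  hence "x \<notin> K.span {}" using x by auto
  with K.Ker.lin_dep_iff_in_span[of "{}" x] x
  have li0: "K.lin_indpt {}" unfolding K.Ker.lin_dep_def by auto
  with K.Ker.lin_dep_iff_in_span[of "{}" x] x \<open>x \<notin> K.span {}\<close>
  have li1: "K.lin_indpt {x}" by auto
  have vs: "v \<in> K.span {x}"
  proof (rule ccontr)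
    assume nv: "v \<notin> K.span {x}"
    have xs: "x \<in> K.span {x}" using x K.Ker.in_own_span[of "{x}"] by auto
    hence vx: "v \<notin> {x}" using nv by auto
    from K.Ker.lin_dep_iff_in_span[of "{x}" v] x v li1 nv vx
    have li2: "K.lin_indpt ({x} \<union> {v})" by auto
    from K.Ker.li_le_dim(2)[OF fd _ li2] x v have "card ({x} \<union> {v}) \<le> K.dim" by auto
    with vx d show False by auto
  qed
  hence "v \<in> K.NC.span {x}" using K.span_same[of "{x}"] x by auto
  then obtain a where "v = K.NC.lincomb a {x}"
    using K.NC.finite_span[of "{x}"] x M by (auto simp: mat_kernel_def)
  hence "v = a x \<cdot>\<^sub>v x" unfolding K.NC.lincomb_def using x M by (simp add: mat_kernel_def)
  thus ?thesis by auto
qed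
lemma sum_list_min2:
  fixes ns :: "nat list"
  assumes "\<forall>x\<in>set ns. x > 0"
  shows "min 2 (sum_list ns) \<le> sum_list (map (min 2) ns)"
  using assms by (induct ns, auto)

lemma sum_list_min1:
  fixes ns :: "nat list"
  shows "sum_list (map (min 1) ns) \<le> sum_list ns"
  by (induct ns, auto)

lemma jnf_dims:
  fixes M :: "complex mat"
  assumes M: "M \<in> carrier_mat n n"
  shows "Polynomial.order lam (char_poly M) \<ge> 2 \<Longrightarrow> dim_gen_eigenspace M lam 2 \<ge> 2"
    and "Polynomial.order lam (char_poly M) = 1 \<Longrightarrow> dim_gen_eigenspace M lam 1 \<le> 1"
proof -
  from char_poly_factorized[OF M] obtain as where "char_poly M = (\<Prod>a\<leftarrow>as. [:- a, 1:])" by auto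
  from jordan_nf_exists[OF M this] obtain n_as where jnf: "jordan_nf M n_as" by auto
  define ns where "ns = map fst (filter (\<lambda>na. snd na = lam) n_as)"
  have ord: "Polynomial.order lam (char_poly M) = sum_list ns" unfolding ns_def by (rule jordan_nf_order[OF jnf])
  have fl: "[(n, e)\<leftarrow>n_as . e = lam] = filter (\<lambda>na. snd na = lam) n_as"
    by (rule filter_cong, auto)
  have dim: "dim_gen_eigenspace M lam k = sum_list (map (min k) ns)" for k
    unfolding dim_gen_eigenspace[OF jnf] fl ns_def by (simp add: o_def)
  have pos: "\<forall>x\<in>set ns. x > 0" using jnf unfolding jordan_nf_def ns_def by force
  show "Polynomial.order lam (char_poly M) \<ge> 2 \<Longrightarrow> dim_gen_eigenspace M lam 2 \<ge> 2"
    using sum_list_min2[OF pos] unfolding ord dim by auto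
  show "Polynomial.order lam (char_poly M) = 1 \<Longrightarrow> dim_gen_eigenspace M lam 1 \<le> 1"
    using sum_list_min1[of ns] unfolding ord dim by auto
qed
lemma order_of_real: "Polynomial.order (complex_of_real x) (map_poly complex_of_real f) = Polynomial.order x f"
proof -
  interpret h: map_poly_inj_idom_divide_hom complex_of_real by (unfold_locales, auto)
  show ?thesis by (rule h.order_hom)
qed

lemma char_matrix_mult_vec:
  fixes M :: "'a::field mat"
  assumes M: "M \<in> carrier_mat n n" and z: "z \<in> carrier_vec n"
  shows "char_matrix M e *\<^sub>v z = M *\<^sub>v z - e \<cdot>\<^sub>v z"
proof -
  have "char_matrix M e *\<^sub>v z = M *\<^sub>v z + ((- e) \<cdot>\<^sub>m 1\<^sub>m n) *\<^sub>v z"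
    unfolding char_matrix_def using M z by (subst add_mult_distrib_mat_vec, auto)
  also have "((- e) \<cdot>\<^sub>m 1\<^sub>m n) *\<^sub>v z = (- e) \<cdot>\<^sub>v z"
    using smult_mat_mult_vec[of "1\<^sub>m n" n z "- e"] z by simp
  also have "M *\<^sub>v z + (- e) \<cdot>\<^sub>v z = M *\<^sub>v z - e \<cdot>\<^sub>v z" using M z by (intro eq_vecI, auto)
  finally show ?thesis .
qed

lemma char_matrix_pow1_kernel:
  fixes M :: "'a::field mat"
  assumes M: "M \<in> carrier_mat n n"
  shows "mat_kernel (char_matrix M e ^\<^sub>m 1) = {z. z \<in> carrier_vec n \<and> M *\<^sub>v z = e \<cdot>\<^sub>v z}"
proof -
  have C: "char_matrix M e \<in> carrier_mat n n" using M by auto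
  have eq: "char_matrix M e ^\<^sub>m 1 = char_matrix M e" using C by simp
  show ?thesis unfolding eq mat_kernel[OF C]
  proof (intro Collect_cong conj_cong refl)
    fix z :: "'a vec" assume z: "z \<in> carrier_vec n"
    show "(char_matrix M e *\<^sub>v z = 0\<^sub>v n) = (M *\<^sub>v z = e \<cdot>\<^sub>v z)"
      unfolding char_matrix_mult_vec[OF M z]
    proof
      assume h: "M *\<^sub>v z - e \<cdot>\<^sub>v z = 0\<^sub>v n"
      show "M *\<^sub>v z = e \<cdot>\<^sub>v z"
      proof (rule eq_vecI)
        fix i assume i: "i < dim_vec (e \<cdot>\<^sub>v z)"
        hence "(M *\<^sub>v z - e \<cdot>\<^sub>v z) $ i = 0" using h z by simp
        thus "(M *\<^sub>v z) $ i = (e \<cdot>\<^sub>v z) $ i" using i M z by simp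
      qed (insert M z, auto)
    next
      assume "M *\<^sub>v z = e \<cdot>\<^sub>v z"
      thus "M *\<^sub>v z - e \<cdot>\<^sub>v z = 0\<^sub>v n" using z by auto
    qed
  qed
qed

lemma char_matrix_pow2_kernel:
  fixes M :: "'a::field mat"
  assumes M: "M \<in> carrier_mat n n" and z: "z \<in> carrier_vec n"
  shows "z \<in> mat_kernel (char_matrix M e ^\<^sub>m 2) \<longleftrightarrow>
    char_matrix M e *\<^sub>v z \<in> mat_kernel (char_matrix M e ^\<^sub>m 1)"
proof -
  have C: "char_matrix M e \<in> carrier_mat n n" using M by auto
  have eq: "char_matrix M e ^\<^sub>m 2 = char_matrix M e * char_matrix M e" using C
    by (simp add: numeral_2_eq_2)
  have eq1: "char_matrix M e ^\<^sub>m 1 = char_matrix M e" using C by simp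
  have C2: "char_matrix M e * char_matrix M e \<in> carrier_mat n n" using C by auto
  show ?thesis unfolding eq eq1 mat_kernel[OF C2] mat_kernel[OF C]
    using assoc_mult_mat_vec[OF C C z] C z by auto
qed
lemma alg_simple_geom:
  fixes M :: "complex mat"
  assumes M: "M \<in> carrier_mat n n" and o: "Polynomial.order lam (char_poly M) = 1"
  and x: "x \<in> carrier_vec n" "x \<noteq> 0\<^sub>v n" "M *\<^sub>v x = lam \<cdot>\<^sub>v x"
  and v: "v \<in> carrier_vec n" "M *\<^sub>v v = lam \<cdot>\<^sub>v v"
  shows "\<exists>a. v = a \<cdot>\<^sub>v x"
proof -
  have C: "char_matrix M lam ^\<^sub>m 1 \<in> carrier_mat n n" using M by auto
  have "kernel_dim (char_matrix M lam ^\<^sub>m 1) \<le> 1"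
    using jnf_dims(2)[OF M o] unfolding dim_gen_eigenspace_def .
  from kernel_dim_le1_span[OF C _ x(2) _ this] x v show ?thesis
    unfolding char_matrix_pow1_kernel[OF M] by auto
qed

lemma kernel2_char:
  fixes M :: "'a::field mat"
  assumes M: "M \<in> carrier_mat n n" and z: "z \<in> mat_kernel (char_matrix M lam ^\<^sub>m 2)"
  shows "z \<in> carrier_vec n \<and> M *\<^sub>v (M *\<^sub>v z - lam \<cdot>\<^sub>v z) = lam \<cdot>\<^sub>v (M *\<^sub>v z - lam \<cdot>\<^sub>v z)"
proof -
  have C2: "char_matrix M lam ^\<^sub>m 2 \<in> carrier_mat n n" using M by auto
  have zc: "z \<in> carrier_vec n" using mat_kernelD[OF C2 z] by auto
  from char_matrix_pow2_kernel[OF M zc, of lam] z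
  have "char_matrix M lam *\<^sub>v z \<in> mat_kernel (char_matrix M lam ^\<^sub>m 1)" by auto
  thus ?thesis unfolding char_matrix_pow1_kernel[OF M] char_matrix_mult_vec[OF M zc] using zc by auto
qed

lemma geom_alg_simple:
  fixes M :: "complex mat"
  assumes M: "M \<in> carrier_mat n n"
  and x: "x \<in> carrier_vec n" "x \<noteq> 0\<^sub>v n" "M *\<^sub>v x = lam \<cdot>\<^sub>v x"
  and H: "\<And>z. z \<in> carrier_vec n \<Longrightarrow> M *\<^sub>v (M *\<^sub>v z - lam \<cdot>\<^sub>v z) = lam \<cdot>\<^sub>v (M *\<^sub>v z - lam \<cdot>\<^sub>v z)
     \<Longrightarrow> \<exists>a. z = a \<cdot>\<^sub>v x"
  shows "Polynomial.order lam (char_poly M) = 1"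
proof -
  have ev: "eigenvalue M lam" using x M unfolding eigenvalue_def eigenvector_def by auto
  have root: "poly (char_poly M) lam = 0" using eigenvalue_root_char_poly[OF M] ev by auto
  have nz: "char_poly M \<noteq> 0" using degree_monic_char_poly[OF M] by auto
  have ge1: "Polynomial.order lam (char_poly M) \<noteq> 0" using root nz order_root by auto
  have C2: "char_matrix M lam ^\<^sub>m 2 \<in> carrier_mat n n" using M by auto
  have xk: "x \<in> mat_kernel (char_matrix M lam ^\<^sub>m 2)"
  proof -
    have "char_matrix M lam *\<^sub>v x = 0\<^sub>v n" using char_matrix_mult_vec[OF M x(1), of lam] x M
      by (auto intro!: eq_vecI)
    hence "char_matrix M lam *\<^sub>v x \<in> mat_kernel (char_matrix M lam ^\<^sub>m 1)"
      unfolding char_matrix_pow1_kernel[OF M] using M by auto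
    thus ?thesis using char_matrix_pow2_kernel[OF M x(1)] by auto
  qed
  have "kernel_dim (char_matrix M lam ^\<^sub>m 2) \<le> 1"
  proof (rule kernel_dim_le1[OF C2 xk])
    fix z assume "z \<in> mat_kernel (char_matrix M lam ^\<^sub>m 2)"
    from kernel2_char[OF M this] H show "\<exists>a. z = a \<cdot>\<^sub>v x" by auto
  qed
  hence "\<not> Polynomial.order lam (char_poly M) \<ge> 2"
    using jnf_dims(1)[OF M] unfolding dim_gen_eigenspace_def by fastforce
  with ge1 show ?thesis by linarith
qed
lemma mat_mult_idx:
  assumes "X \<in> carrier_mat n m" "Y \<in> carrier_mat m k" "i < n" "j < k"
  shows "(X * Y) $$ (i,j) = (\<Sum>l<m. X $$ (i,l) * Y $$ (l,j))"
  using assms by (auto simp: scalar_prod_def atLeast0LessThan intro!: sum.cong)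

lemma sgn_eq_mult_pos:
  fixes a b :: real
  assumes "sgn a = sgn b" "a \<noteq> 0"
  shows "a * b > 0"
  using assms by (cases "a > 0") (auto simp: sgn_if zero_less_mult_iff split: if_splits)

lemma se_imp_ev:
  fixes A :: "real mat"
  assumes A: "A \<in> carrier_mat n n" and n: "n > 0" and se: "signature_equality n A"
  shows "eventually_SJS n A"
proof -
  from se obtain lam x y where lam: "lam > 0" and ord: "Polynomial.order lam (char_poly A) = 1"
    and evc: "\<And>\<mu>. eigenvalue (map_mat complex_of_real A) \<mu> \<Longrightarrow> \<mu> \<noteq> complex_of_real lam \<Longrightarrow> cmod \<mu> < lam"
    and x: "x \<in> carrier_vec n" and y: "y \<in> carrier_vec n"
    and Ax: "A *\<^sub>v x = lam \<cdot>\<^sub>v x" and Ay: "transpose_mat A *\<^sub>v y = lam \<cdot>\<^sub>v y"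
    and sg: "\<And>i. i < n \<Longrightarrow> x $ i \<noteq> 0 \<and> y $ i \<noteq> 0 \<and> sgn (x $ i) = sgn (y $ i)"
    unfolding signature_equality_def by blast
  have xy: "x$i * y$i > 0" if "i < n" for i using sg[OF that] sgn_eq_mult_pos by auto
  define s where "s = (\<Sum>i<n. x$i * y$i)"
  have s: "s > 0" unfolding s_def using xy n by (intro sum_pos, auto)
  define P where "P = mat n n (\<lambda>(i,j). x$i * y$j / s)"
  define N where "N = mat n n (\<lambda>(i,j). A$$(i,j) - lam * P$$(i,j))"
  have P: "P \<in> carrier_mat n n" and N: "N \<in> carrier_mat n n" unfolding P_def N_def by auto
  have Axi: "(\<Sum>l<n. A$$(i,l) * x$l) = lam * x$i" if "i < n" for i
    using arg_cong[OF Ax, of "\<lambda>v. v$i"] mult_mat_vec_idx[OF A x that] that x by simp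
  have Ayj: "(\<Sum>l<n. A$$(l,j) * y$l) = lam * y$j" if "j < n" for j
  proof -
    have At: "transpose_mat A \<in> carrier_mat n n" using A by auto
    have "(transpose_mat A *\<^sub>v y)$j = (\<Sum>l<n. A$$(l,j) * y$l)"
      unfolding mult_mat_vec_idx[OF At y that] using that A by (intro sum.cong, auto)
    thus ?thesis using Ay that y by simp
  qed
  have AP: "(\<Sum>l<n. A$$(i,l) * P$$(l,j)) = lam * P$$(i,j)" if "i < n" "j < n" for i j
  proof -
    have "(\<Sum>l<n. A$$(i,l) * P$$(l,j)) = (\<Sum>l<n. A$$(i,l) * x$l) * y$j / s"
      unfolding P_def using that by (simp add: sum_distrib_right sum_divide_distrib mult.assoc)
    thus ?thesis using Axi[OF that(1)] that unfolding P_def by simp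
  qed
  have PA: "(\<Sum>l<n. P$$(i,l) * A$$(l,j)) = lam * P$$(i,j)" if "i < n" "j < n" for i j
  proof -
    have "(\<Sum>l<n. P$$(i,l) * A$$(l,j)) = x$i * (\<Sum>l<n. A$$(l,j) * y$l) / s"
      unfolding P_def using that by (simp add: sum_distrib_left sum_divide_distrib algebra_simps)
    thus ?thesis using Ayj[OF that(2)] that unfolding P_def by simp
  qed
  have PP: "(\<Sum>l<n. P$$(i,l) * P$$(l,j)) = P$$(i,j)" if "i < n" "j < n" for i j
  proof -
    have "(\<Sum>l<n. P$$(i,l) * P$$(l,j)) = x$i * y$j * s / (s * s)"
      unfolding P_def s_def using that
      by (simp add: sum_distrib_left sum_distrib_right sum_divide_distrib algebra_simps)
    thus ?thesis using s that unfolding P_def by simp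
  qed
  have NP: "N * P = 0\<^sub>m n n"
  proof (rule eq_matI)
    fix i j assume ij: "i < dim_row (0\<^sub>m n n :: real mat)" "j < dim_col (0\<^sub>m n n :: real mat)"
    have ij': "i < n" "j < n" using ij by auto
    have "(N * P) $$ (i,j) = (\<Sum>l<n. N$$(i,l) * P$$(l,j))" by (rule mat_mult_idx[OF N P ij'])
    also have "\<dots> = (\<Sum>l<n. A$$(i,l) * P$$(l,j)) - lam * (\<Sum>l<n. P$$(i,l) * P$$(l,j))"
      using ij' unfolding N_def
      by (simp add: sum_subtractf sum_distrib_left algebra_simps)
    finally have "(N * P) $$ (i,j) = (\<Sum>l<n. A$$(i,l) * P$$(l,j)) - lam * (\<Sum>l<n. P$$(i,l) * P$$(l,j))" .
    thus "(N * P) $$ (i,j) = 0\<^sub>m n n $$ (i,j)" using AP PP ij by simp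
  qed (insert N P, auto)
  have PN: "P * N = 0\<^sub>m n n"
  proof (rule eq_matI)
    fix i j assume ij: "i < dim_row (0\<^sub>m n n :: real mat)" "j < dim_col (0\<^sub>m n n :: real mat)"
    have ij': "i < n" "j < n" using ij by auto
    have "(P * N) $$ (i,j) = (\<Sum>l<n. P$$(i,l) * N$$(l,j))" by (rule mat_mult_idx[OF P N ij'])
    also have "\<dots> = (\<Sum>l<n. P$$(i,l) * A$$(l,j)) - lam * (\<Sum>l<n. P$$(i,l) * P$$(l,j))"
      using ij' unfolding N_def
      by (simp add: sum_subtractf sum_distrib_left algebra_simps)
    finally have "(P * N) $$ (i,j) = (\<Sum>l<n. P$$(i,l) * A$$(l,j)) - lam * (\<Sum>l<n. P$$(i,l) * P$$(l,j))" .
    thus "(P * N) $$ (i,j) = 0\<^sub>m n n $$ (i,j)" using PA PP ij by simp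
  qed (insert N P, auto)
  have PPm: "P * P = P"
  proof (rule eq_matI)
    fix i j assume "i < dim_row P" "j < dim_col P"
    hence ij: "i < n" "j < n" using P by auto
    show "(P * P) $$ (i,j) = P $$ (i,j)" using PP[OF ij] mat_mult_idx[OF P P ij] by simp
  qed (insert P, auto)
  have AN: "A = N + lam \<cdot>\<^sub>m P" using A unfolding N_def P_def by (intro eq_matI, auto)
  have NmP: "N ^\<^sub>m (Suc m) * P = 0\<^sub>m n n" for m
  proof -
    have Nm: "N ^\<^sub>m m \<in> carrier_mat n n" using N by auto
    have "N ^\<^sub>m (Suc m) * P = N ^\<^sub>m m * (N * P)" by (simp, rule assoc_mult_mat[OF Nm N P])
    also have "\<dots> = 0\<^sub>m n n" unfolding NP using Nm by (simp add: right_mult_zero_mat)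
    finally show ?thesis .
  qed
  have pw: "A ^\<^sub>m (Suc m) = N ^\<^sub>m (Suc m) + (lam ^ Suc m) \<cdot>\<^sub>m P" for m
  proof (induct m)
    case 0 then show ?case using A N P AN by simp
  next
    case (Suc m)
    define c where "c = lam ^ Suc m"
    have N1: "N ^\<^sub>m (Suc m) \<in> carrier_mat n n" using N by auto
    have cP: "c \<cdot>\<^sub>m P \<in> carrier_mat n n" "lam \<cdot>\<^sub>m P \<in> carrier_mat n n" using P by auto
    have "A ^\<^sub>m Suc (Suc m) = (N ^\<^sub>m (Suc m) + c \<cdot>\<^sub>m P) * (N + lam \<cdot>\<^sub>m P)"
      using Suc AN unfolding c_def by (metis pow_mat.simps(2))
    also have "\<dots> = N ^\<^sub>m (Suc m) * (N + lam \<cdot>\<^sub>m P) + (c \<cdot>\<^sub>m P) * (N + lam \<cdot>\<^sub>m P)"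
      by (rule add_mult_distrib_mat[OF N1 cP(1)], insert N P, auto)
    also have "N ^\<^sub>m (Suc m) * (N + lam \<cdot>\<^sub>m P) = N ^\<^sub>m (Suc m) * N + N ^\<^sub>m (Suc m) * (lam \<cdot>\<^sub>m P)"
      by (rule mult_add_distrib_mat[OF N1 N cP(2)])
    also have "(c \<cdot>\<^sub>m P) * (N + lam \<cdot>\<^sub>m P) = (c \<cdot>\<^sub>m P) * N + (c \<cdot>\<^sub>m P) * (lam \<cdot>\<^sub>m P)"
      by (rule mult_add_distrib_mat[OF cP(1) N cP(2)])
    also have "N ^\<^sub>m (Suc m) * (lam \<cdot>\<^sub>m P) = 0\<^sub>m n n"
      using mult_smult_distrib[OF N1 P, of lam] NmP[of m] by simp
    also have "(c \<cdot>\<^sub>m P) * N = 0\<^sub>m n n"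
      using mult_smult_assoc_mat[OF P N, of c] PN by simp
    also have "(c \<cdot>\<^sub>m P) * (lam \<cdot>\<^sub>m P) = (c * lam) \<cdot>\<^sub>m P"
      using mult_smult_assoc_mat[OF P cP(2), of c] mult_smult_distrib[OF P P, of lam] PPm
      by (auto intro!: eq_matI)
    finally show ?case unfolding c_def using N P by (auto intro!: eq_matI)
  qed
  define Ac where "Ac = map_mat complex_of_real A"
  define Nc where "Nc = map_mat complex_of_real N"
  define Pc where "Pc = map_mat complex_of_real P"
  have Ac: "Ac \<in> carrier_mat n n" and Nc: "Nc \<in> carrier_mat n n" and Pc: "Pc \<in> carrier_mat n n"
    unfolding Ac_def Nc_def Pc_def using A N P by auto
  define xc where "xc = map_vec complex_of_real x"
  have xc: "xc \<in> carrier_vec n" unfolding xc_def using x by auto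
  have xc0: "xc \<noteq> 0\<^sub>v n" using sg[OF n] n x unfolding xc_def by (auto simp: vec_eq_iff)
  have Acx: "Ac *\<^sub>v xc = complex_of_real lam \<cdot>\<^sub>v xc"
    unfolding Ac_def xc_def of_real_hom.mult_mat_vec_hom[OF A x, symmetric] Ax
    by (simp add: of_real_hom.vec_hom_smult)
  have Px: "P *\<^sub>v x = x"
  proof (rule eq_vecI)
    fix i assume "i < dim_vec x" hence i: "i < n" using x by auto
    have "(P *\<^sub>v x)$i = (\<Sum>l<n. x$i * y$l / s * x$l)" unfolding mult_mat_vec_idx[OF P x i]
      unfolding P_def using i by (intro sum.cong, auto)
    also have "\<dots> = x$i * s / s" unfolding s_def by (simp add: sum_distrib_left sum_divide_distrib algebra_simps)
    finally show "(P *\<^sub>v x)$i = x$i" using s by simp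
  qed (insert P x, auto)
  have Pcx: "Pc *\<^sub>v xc = xc" unfolding Pc_def xc_def of_real_hom.mult_mat_vec_hom[OF P x, symmetric] Px ..
  have AcNP: "Ac = Nc + complex_of_real lam \<cdot>\<^sub>m Pc"
    unfolding Ac_def Nc_def Pc_def using A N P by (subst AN, intro eq_matI, auto)
  have ordc: "Polynomial.order (complex_of_real lam) (char_poly Ac) = 1"
    unfolding Ac_def of_real_hom.char_poly_hom[OF A] order_of_real ord ..
  have evN: "cmod \<mu> < lam" if "eigenvalue Nc \<mu>" for \<mu>
  proof -
    from that obtain v where v: "v \<in> carrier_vec n" "v \<noteq> 0\<^sub>v n" "Nc *\<^sub>v v = \<mu> \<cdot>\<^sub>v v"
      unfolding eigenvalue_def eigenvector_def using Nc by auto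
    show ?thesis
    proof (cases "\<mu> = 0")
      case True then show ?thesis using lam by simp
    next
      case False
      have "Pc *\<^sub>v (Nc *\<^sub>v v) = (Pc * Nc) *\<^sub>v v" by (rule assoc_mult_mat_vec[symmetric, OF Pc Nc v(1)])
      also have "Pc * Nc = map_mat complex_of_real (P * N)" unfolding Pc_def Nc_def
        by (rule of_real_hom.mat_hom_mult[symmetric, OF P N])
      also have "\<dots> = 0\<^sub>m n n" unfolding PN by auto
      finally have "Pc *\<^sub>v (\<mu> \<cdot>\<^sub>v v) = 0\<^sub>v n" using v by auto
      hence "\<mu> \<cdot>\<^sub>v (Pc *\<^sub>v v) = 0\<^sub>v n" using mult_mat_vec[OF Pc v(1)] by simp
      hence Pv: "Pc *\<^sub>v v = 0\<^sub>v n" using False Pc by (auto simp: vec_eq_iff)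
      have Av: "Ac *\<^sub>v v = \<mu> \<cdot>\<^sub>v v"
        unfolding AcNP using add_mult_distrib_mat_vec[OF Nc _ v(1), of "complex_of_real lam \<cdot>\<^sub>m Pc"]
          smult_mat_mult_vec[OF Pc v(1)] Pv v Pc by auto
      show ?thesis
      proof (cases "\<mu> = complex_of_real lam")
        case False
        have "eigenvalue Ac \<mu>" using Av v Ac unfolding eigenvalue_def eigenvector_def by auto
        from evc[OF this[unfolded Ac_def] False] show ?thesis .
      next
        case True
        from alg_simple_geom[OF Ac ordc xc xc0 Acx v(1)] Av True obtain a where va: "v = a \<cdot>\<^sub>v xc" by auto
        have "Pc *\<^sub>v v = a \<cdot>\<^sub>v xc" unfolding va using mult_mat_vec[OF Pc xc] Pcx by simp
        hence "v = 0\<^sub>v n" using Pv va by simp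
        with v(2) show ?thesis by simp
      qed
    qed
  qed
  define r where "r = spectral_radius Nc"
  obtain \<mu>r where mur: "r = cmod \<mu>r" "eigenvalue Nc \<mu>r"
    using spectral_radius_mem_max(1)[OF Nc n] unfolding r_def spectrum_def by auto
  have rl: "r < lam" using evN[OF mur(2)] mur(1) by simp
  have r0: "r \<ge> 0" using mur(1) by simp
  define t where "t = (r + lam) / 2"
  have t: "t > 0" "t < lam" using rl r0 lam unfolding t_def by auto
  have evN': "cmod \<mu> < t" if "eigenvalue (map_mat complex_of_real N) \<mu>" for \<mu>
  proof -
    have "cmod \<mu> \<le> r" unfolding r_def using that unfolding Nc_def[symmetric]
      by (intro spectral_radius_mem_max(2)[OF Nc n], auto simp: spectrum_def)
    thus ?thesis using rl unfolding t_def by auto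
  qed
  from real_mat_pow_bound[OF N t(1) evN'] obtain C where
    C: "\<And>m i j. i < n \<Longrightarrow> j < n \<Longrightarrow> \<bar>(N ^\<^sub>m m) $$ (i,j)\<bar> \<le> C * t^m" by auto
  define D where "D = {\<bar>P$$(i,j)\<bar> | i j. i < n \<and> j < n}"
  define \<delta> where "\<delta> = Min D"
  have Dfin: "finite D" unfolding D_def
  proof -
    have "{\<bar>P$$(i,j)\<bar> | i j. i < n \<and> j < n} = (\<lambda>(i,j). \<bar>P$$(i,j)\<bar>) ` ({..<n} \<times> {..<n})" by auto
    thus "finite {\<bar>P$$(i,j)\<bar> | i j. i < n \<and> j < n}" by simp
  qed
  have Dne: "D \<noteq> {}" unfolding D_def using n by auto
  have Ppos: "\<bar>P$$(i,j)\<bar> > 0" if "i < n" "j < n" for i j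
    using that sg s unfolding P_def by auto
  have \<delta>: "\<delta> > 0" unfolding \<delta>_def using Min_gr_iff[OF Dfin Dne] Ppos unfolding D_def by auto
  have \<delta>le: "\<delta> \<le> \<bar>P$$(i,j)\<bar>" if "i < n" "j < n" for i j
    unfolding \<delta>_def using that by (intro Min_le[OF Dfin], auto simp: D_def)
  have lim: "(\<lambda>m. (\<bar>C\<bar> + 1) * (t / lam)^m) \<longlonglongrightarrow> 0"
    by (rule tendsto_mult_right_zero, rule LIMSEQ_power_zero, insert t lam, auto)
  from order_tendstoD(2)[OF lim \<delta>] obtain m0 where
    m0: "\<And>m. m \<ge> m0 \<Longrightarrow> (\<bar>C\<bar> + 1) * (t / lam)^m < \<delta>" unfolding eventually_sequentially by auto
  define J where "J = {i. i < n \<and> x$i > 0}"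
  show ?thesis unfolding eventually_SJS_def
  proof (intro exI[of _ "Suc m0"] conjI allI impI)
    fix k assume k: "Suc m0 \<le> k"
    then obtain m where km: "k = Suc m" by (cases k, auto)
    have small: "\<bar>(N ^\<^sub>m k) $$ (i,j)\<bar> < lam ^ k * \<delta>" if ij: "i < n" "j < n" for i j
    proof -
      have "\<bar>(N ^\<^sub>m k) $$ (i,j)\<bar> \<le> C * t^k" by (rule C[OF ij])
      also have "\<dots> \<le> (\<bar>C\<bar> + 1) * t^k" using t by (intro mult_right_mono, auto)
      also have "\<dots> = (\<bar>C\<bar> + 1) * (t / lam)^k * lam ^ k" using lam by (simp add: power_divide)
      also have "\<dots> < \<delta> * lam ^ k" using m0[of k] k lam by (intro mult_strict_right_mono, auto)
      finally show ?thesis by (simp add: mult.commute)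
    qed
    have entry: "(A ^\<^sub>m k) $$ (i,j) = (N ^\<^sub>m k) $$ (i,j) + lam ^ k * P $$ (i,j)" if ij: "i < n" "j < n" for i j
      unfolding km pw using ij N P by simp
    have "strictly_J_sign_symmetric n J (A ^\<^sub>m k)"
      unfolding strictly_J_sign_symmetric_def
    proof (intro conjI allI impI)
      show "J \<subseteq> {0..<n}" unfolding J_def by auto
      fix i j assume ij: "i < n" "j < n"
      have xs: "x$i * x$j > 0 \<longleftrightarrow> (i \<in> J) = (j \<in> J)" using sg[OF ij(1)] sg[OF ij(2)] ij
        unfolding J_def by (auto simp: zero_less_mult_iff)
      have Psign: "x$i * y$j > 0 \<longleftrightarrow> x$i * x$j > 0"
        using sg[OF ij(2)] by (auto simp: zero_less_mult_iff sgn_if split: if_splits)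
      have Pij: "P $$ (i,j) = x$i * y$j / s" unfolding P_def using ij by simp
      have lk: "lam ^ k > 0" using lam by simp
      {
        assume "(i \<in> J) = (j \<in> J)"
        hence "P $$ (i,j) > 0" unfolding Pij using xs Psign s by auto
        hence "P $$ (i,j) \<ge> \<delta>" using \<delta>le[OF ij] by auto
        hence "lam ^ k * P $$ (i,j) \<ge> lam ^ k * \<delta>" using lk by auto
        thus "(A ^\<^sub>m k) $$ (i,j) > 0" unfolding entry[OF ij] using small[OF ij] by linarith
      }
      {
        assume "(i \<in> J) \<noteq> (j \<in> J)"
        hence "\<not> x$i * y$j > 0" using xs Psign by auto
        moreover have "x$i * y$j \<noteq> 0" using sg[OF ij(1)] sg[OF ij(2)] by auto
        ultimately have "x$i * y$j < 0" by linarith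
        hence "P $$ (i,j) < 0" unfolding Pij using s by (auto simp: divide_less_0_iff)
        hence "P $$ (i,j) \<le> - \<delta>" using \<delta>le[OF ij] by auto
        hence "lam ^ k * P $$ (i,j) \<le> - (lam ^ k * \<delta>)" using lk
          by (metis minus_mult_right mult_left_mono less_imp_le)
        thus "(A ^\<^sub>m k) $$ (i,j) < 0" unfolding entry[OF ij] using small[OF ij] by linarith
      }
    qed
    thus "SJS n (A ^\<^sub>m k)" unfolding SJS_def by auto
  qed auto
qed
lemma pow_mat_commute:
  fixes A :: "'a::semiring_1 mat"
  assumes A: "A \<in> carrier_mat n n"
  shows "A * A ^\<^sub>m k = A ^\<^sub>m k * A"
proof (induct k)
  case 0 then show ?case using A by simp
next
  case (Suc k)
  have Ak: "A ^\<^sub>m k \<in> carrier_mat n n" using A by auto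
  have "A * A ^\<^sub>m Suc k = A * (A ^\<^sub>m k * A)" by simp
  also have "\<dots> = (A * A ^\<^sub>m k) * A" using assoc_mult_mat[OF A Ak A] by simp
  also have "\<dots> = A ^\<^sub>m Suc k * A" unfolding Suc by simp
  finally show ?case .
qed

definition flipm :: "nat \<Rightarrow> (nat \<Rightarrow> real) \<Rightarrow> real mat \<Rightarrow> real mat" where
  "flipm n s B = mat n n (\<lambda>(i,j). s i * s j * B $$ (i,j))"

definition flipv :: "nat \<Rightarrow> (nat \<Rightarrow> real) \<Rightarrow> 'a::real_algebra_1 vec \<Rightarrow> 'a vec" where
  "flipv n s z = vec n (\<lambda>i. of_real (s i) * z $ i)"

lemma flipv_carrier[simp]: "flipv n s z \<in> carrier_vec n" unfolding flipv_def by auto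

lemma flipv_flipv:
  assumes s: "\<And>i. i < n \<Longrightarrow> s i * s i = 1" and z: "z \<in> carrier_vec n"
  shows "flipv n s (flipv n s z) = (z :: 'a::real_algebra_1 vec)"
proof (rule eq_vecI)
  fix i assume "i < dim_vec z" hence i: "i < n" using z by auto
  have "flipv n s (flipv n s z) $ i = (of_real (s i) * of_real (s i)) * z $ i"
    unfolding flipv_def using i by (simp add: mult.assoc)
  also have "of_real (s i) * of_real (s i) = (of_real (s i * s i) :: 'a)" by simp
  finally show "flipv n s (flipv n s z) $ i = z $ i" using s[OF i] by simp
qed (insert z, auto simp: flipv_def)

lemma flipv_smult: "z \<in> carrier_vec n \<Longrightarrow> flipv n s (a \<cdot>\<^sub>v z) = a \<cdot>\<^sub>v flipv n s (z :: 'a::{real_algebra_1,comm_ring_1} vec)"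
  unfolding flipv_def by (intro eq_vecI, auto simp: mult.left_commute)

lemma flipv_zero_iff:
  assumes s: "\<And>i. i < n \<Longrightarrow> s i * s i = 1" and z: "z \<in> carrier_vec n"
  shows "(flipv n s z = 0\<^sub>v n) = (z = (0\<^sub>v n :: 'a::real_algebra_1 vec))"
proof
  assume "flipv n s z = 0\<^sub>v n"
  hence "flipv n s (flipv n s z) = flipv n s (0\<^sub>v n)" by simp
  moreover have "flipv n s (0\<^sub>v n) = (0\<^sub>v n :: 'a vec)" by (auto simp: flipv_def)
  ultimately show "z = 0\<^sub>v n" using flipv_flipv[OF s z] by simp
qed (auto simp: flipv_def vec_eq_iff)

lemma flipm_mult:
  fixes B :: "real mat" and z :: "'a::{real_algebra_1,comm_ring_1} vec"
  assumes B: "B \<in> carrier_mat n n" and z: "z \<in> carrier_vec n" and s: "\<And>i. i < n \<Longrightarrow> s i * s i = 1"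
  shows "map_mat of_real (flipm n s B) *\<^sub>v flipv n s z = flipv n s (map_mat of_real B *\<^sub>v z)"
proof (rule eq_vecI)
  fix i assume "i < dim_vec (flipv n s (map_mat of_real B *\<^sub>v z))"
  hence i: "i < n" by (simp add: flipv_def)
  have Bs: "map_mat of_real (flipm n s B) \<in> carrier_mat n n" unfolding flipm_def by auto
  have Bc: "map_mat of_real B \<in> carrier_mat n n" using B by auto
  have "(map_mat of_real (flipm n s B) *\<^sub>v flipv n s z) $ i
     = (\<Sum>j<n. of_real (s i * s j * B $$ (i,j)) * (of_real (s j) * z $ j))"
    unfolding mult_mat_vec_idx[OF Bs flipv_carrier i] unfolding flipm_def flipv_def using i
    by (intro sum.cong, auto)
  also have "\<dots> = (\<Sum>j<n. of_real (s i) * (of_real (B $$ (i,j)) * z $ j))"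
  proof (intro sum.cong refl)
    fix j assume "j \<in> {..<n}"
    hence sj: "s j * s j = 1" using s by auto
    have "of_real (s i * s j * B $$ (i,j)) * (of_real (s j) * z $ j)
       = (of_real (s i * (s j * s j) * B $$ (i,j)) :: 'a) * z $ j"
      by (simp add: algebra_simps)
    thus "of_real (s i * s j * B $$ (i,j)) * (of_real (s j) * z $ j) = of_real (s i) * (of_real (B $$ (i,j)) * z $ j)"
      using sj by (simp add: algebra_simps)
  qed
  also have "\<dots> = flipv n s (map_mat of_real B *\<^sub>v z) $ i"
    unfolding flipv_def using i mult_mat_vec_idx[OF Bc z i] B by (simp add: sum_distrib_left)
  finally show "(map_mat of_real (flipm n s B) *\<^sub>v flipv n s z) $ i = flipv n s (map_mat of_real B *\<^sub>v z) $ i" .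
qed (auto simp: flipv_def flipm_def)

lemma flipm_mult_real:
  fixes B :: "real mat" and z :: "real vec"
  assumes B: "B \<in> carrier_mat n n" and z: "z \<in> carrier_vec n" and s: "\<And>i. i < n \<Longrightarrow> s i * s i = 1"
  shows "flipm n s B *\<^sub>v flipv n s z = flipv n s (B *\<^sub>v z)"
proof -
  have e: "map_mat of_real X = X" for X :: "real mat" by (intro eq_matI, auto)
  show ?thesis using flipm_mult[OF B z s] unfolding e .
qed

lemma smult_vec_cancel:
  fixes a b :: "'a::idom"
  assumes x: "x \<in> carrier_vec n" "x \<noteq> 0\<^sub>v n" and e: "a \<cdot>\<^sub>v x = b \<cdot>\<^sub>v x"
  shows "a = b"
proof -
  obtain i where i: "i < n" "x $ i \<noteq> 0" using x by (metis carrier_vecD eq_vecI index_zero_vec(1,2))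
  from arg_cong[OF e, of "\<lambda>v. v $ i"] i x have "a * x $ i = b * x $ i" by simp
  with i show ?thesis by simp
qed
definition sgnJ :: "nat set \<Rightarrow> nat \<Rightarrow> real" where
  "sgnJ J i = (if i \<in> J then 1 else -1)"

lemma sgnJ_sq: "sgnJ J i * sgnJ J i = 1" unfolding sgnJ_def by auto

lemma sjs_transpose:
  assumes "strictly_J_sign_symmetric n J B" "B \<in> carrier_mat n n"
  shows "strictly_J_sign_symmetric n J (transpose_mat B)"
  using assms unfolding strictly_J_sign_symmetric_def by auto

lemma flipv_of_real:
  "u \<in> carrier_vec n \<Longrightarrow> flipv n s (map_vec complex_of_real u) = map_vec complex_of_real (flipv n s u)"
  unfolding flipv_def by (intro eq_vecI, auto)

lemma sjs_perron:
  fixes B :: "real mat"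
  assumes B: "B \<in> carrier_mat n n" and n: "n > 0" and sjs: "strictly_J_sign_symmetric n J B"
  shows "\<exists>\<rho> xv. \<rho> > 0 \<and> xv \<in> carrier_vec n \<and> (\<forall>i<n. xv $ i * sgnJ J i > 0) \<and> B *\<^sub>v xv = \<rho> \<cdot>\<^sub>v xv \<and>
     (\<forall>\<mu> z. z \<in> carrier_vec n \<longrightarrow> z \<noteq> 0\<^sub>v n \<longrightarrow> map_mat complex_of_real B *\<^sub>v z = \<mu> \<cdot>\<^sub>v z \<longrightarrow>
         cmod \<mu> \<le> \<rho> \<and> (cmod \<mu> = \<rho> \<longrightarrow> \<mu> = complex_of_real \<rho> \<and>
            (\<exists>a. z = a \<cdot>\<^sub>v map_vec complex_of_real xv))) \<and>
     (\<forall>q. q \<in> carrier_vec n \<longrightarrow> B *\<^sub>v q = \<rho> \<cdot>\<^sub>v q \<longrightarrow> (\<exists>t. q = t \<cdot>\<^sub>v xv))"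
proof -
  define s where "s = sgnJ J"
  have s: "\<And>i. i < n \<Longrightarrow> s i * s i = 1" unfolding s_def by (rule sgnJ_sq)
  define P where "P = flipm n s B"
  have P: "P \<in> carrier_mat n n" unfolding P_def flipm_def by auto
  have pos: "P $$ (i,j) > 0" if "i < n" "j < n" for i j
    using sjs that unfolding P_def flipm_def s_def sgnJ_def strictly_J_sign_symmetric_def
    by (auto simp: mult_neg_neg)
  from perron_positive[OF P n pos] obtain \<rho> u where
    rho: "\<rho> > 0" and u: "u \<in> carrier_vec n" and upos: "\<forall>i<n. u$i > 0" and Pu: "P *\<^sub>v u = \<rho> \<cdot>\<^sub>v u"
    and cx: "\<And>\<mu> z. z \<in> carrier_vec n \<Longrightarrow> z \<noteq> 0\<^sub>v n \<Longrightarrow> map_mat complex_of_real P *\<^sub>v z = \<mu> \<cdot>\<^sub>v z \<Longrightarrow>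
         cmod \<mu> \<le> \<rho> \<and> (cmod \<mu> = \<rho> \<longrightarrow> \<mu> = complex_of_real \<rho> \<and>
            (\<exists>a. z = a \<cdot>\<^sub>v map_vec complex_of_real u))" by blast
  define xv where "xv = flipv n s u"
  have xv: "xv \<in> carrier_vec n" unfolding xv_def by simp
  have uxv: "u = flipv n s xv" unfolding xv_def using flipv_flipv[OF s u] by simp
  have xvs: "xv $ i * sgnJ J i > 0" if "i < n" for i
    using upos that s[OF that] unfolding xv_def flipv_def s_def by (simp add: mult.commute mult.left_commute)
  have Bxv: "B *\<^sub>v xv = \<rho> \<cdot>\<^sub>v xv"
  proof -
    have "flipv n s (B *\<^sub>v xv) = \<rho> \<cdot>\<^sub>v flipv n s xv"
      using flipm_mult_real[OF B xv s] Pu unfolding P_def uxv by simp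
    hence "flipv n s (flipv n s (B *\<^sub>v xv)) = flipv n s (\<rho> \<cdot>\<^sub>v flipv n s xv)" by simp
    moreover have "flipv n s (flipv n s (B *\<^sub>v xv)) = B *\<^sub>v xv"
      by (rule flipv_flipv[OF s], insert B xv, auto)
    moreover have "flipv n s (\<rho> \<cdot>\<^sub>v flipv n s xv) = \<rho> \<cdot>\<^sub>v xv"
      using flipv_smult[of "flipv n s xv" n s \<rho>] flipv_flipv[OF s xv] by simp
    ultimately show ?thesis by simp
  qed
  have cx': "cmod \<mu> \<le> \<rho> \<and> (cmod \<mu> = \<rho> \<longrightarrow> \<mu> = complex_of_real \<rho> \<and>
            (\<exists>a. z = a \<cdot>\<^sub>v map_vec complex_of_real xv))"
    if z: "z \<in> carrier_vec n" "z \<noteq> 0\<^sub>v n" "map_mat complex_of_real B *\<^sub>v z = \<mu> \<cdot>\<^sub>v z" for \<mu> z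
  proof -
    have fz: "flipv n s z \<in> carrier_vec n" "flipv n s z \<noteq> 0\<^sub>v n" using flipv_zero_iff[OF s z(1)] z by auto
    have "map_mat complex_of_real P *\<^sub>v flipv n s z = flipv n s (map_mat complex_of_real B *\<^sub>v z)"
      unfolding P_def by (rule flipm_mult[OF B z(1) s])
    also have "\<dots> = \<mu> \<cdot>\<^sub>v flipv n s z" unfolding z(3) by (rule flipv_smult[OF z(1)])
    finally have "map_mat complex_of_real P *\<^sub>v flipv n s z = \<mu> \<cdot>\<^sub>v flipv n s z" .
    from cx[OF fz this] have le: "cmod \<mu> \<le> \<rho>" and
      eq: "cmod \<mu> = \<rho> \<Longrightarrow> \<mu> = complex_of_real \<rho> \<and> (\<exists>a. flipv n s z = a \<cdot>\<^sub>v map_vec complex_of_real u)" by auto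
    show ?thesis
    proof (intro conjI impI le)
      assume m: "cmod \<mu> = \<rho>"
      from eq[OF m] show "\<mu> = complex_of_real \<rho>" by auto
      from eq[OF m] obtain a where a: "flipv n s z = a \<cdot>\<^sub>v map_vec complex_of_real u" by auto
      have "z = flipv n s (flipv n s z)" using flipv_flipv[OF s z(1)] by simp
      also have "\<dots> = a \<cdot>\<^sub>v flipv n s (map_vec complex_of_real u)" unfolding a
        using u by (intro flipv_smult, auto)
      also have "flipv n s (map_vec complex_of_real u) = map_vec complex_of_real xv"
        unfolding flipv_of_real[OF u] xv_def ..
      finally show "\<exists>a. z = a \<cdot>\<^sub>v map_vec complex_of_real xv" by auto
    qed
  qed
  have ru: "\<exists>t. q = t \<cdot>\<^sub>v xv" if q: "q \<in> carrier_vec n" "B *\<^sub>v q = \<rho> \<cdot>\<^sub>v q" for q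
  proof (cases "q = 0\<^sub>v n")
    case True then show ?thesis using xv by (intro exI[of _ 0], auto)
  next
    case False
    define qc where "qc = map_vec complex_of_real q"
    have qc: "qc \<in> carrier_vec n" "qc \<noteq> 0\<^sub>v n" unfolding qc_def using q(1) False
      by (auto simp: vec_eq_iff)
    have "map_mat complex_of_real B *\<^sub>v qc = complex_of_real \<rho> \<cdot>\<^sub>v qc"
      unfolding qc_def of_real_hom.mult_mat_vec_hom[OF B q(1), symmetric] q(2)
      by (simp add: of_real_hom.vec_hom_smult)
    from cx'[OF qc this] rho obtain a where a: "qc = a \<cdot>\<^sub>v map_vec complex_of_real xv" by auto
    have "q = Re a \<cdot>\<^sub>v xv"
    proof (rule eq_vecI)
      fix i assume "i < dim_vec (Re a \<cdot>\<^sub>v xv)" hence i: "i < n" using xv by auto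
      have "complex_of_real (q $ i) = a * complex_of_real (xv $ i)"
        using arg_cong[OF a, of "\<lambda>v. v $ i"] i q(1) xv unfolding qc_def by simp
      hence "Re (complex_of_real (q $ i)) = Re (a * complex_of_real (xv $ i))" by simp
      thus "q $ i = (Re a \<cdot>\<^sub>v xv) $ i" using i xv by simp
    qed (insert q xv, auto)
    thus ?thesis by auto
  qed
  show ?thesis using rho xv xvs Bxv cx' ru by blast
qed
lemma two_sjs_imp_se:
  fixes A :: "real mat"
  assumes A: "A \<in> carrier_mat n n" and n: "n > 0" and k: "k > 0"
  and s1: "SJS n (A ^\<^sub>m k)" and s2: "SJS n (A ^\<^sub>m (k+1))"
  shows "signature_equality n A"
proof -
  define X where "X = A ^\<^sub>m k"
  define Y where "Y = A ^\<^sub>m (k+1)"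
  have X: "X \<in> carrier_mat n n" and Y: "Y \<in> carrier_mat n n" unfolding X_def Y_def using A by auto
  have XT: "transpose_mat X \<in> carrier_mat n n" using X by auto
  from s1 obtain J where J: "strictly_J_sign_symmetric n J X" unfolding SJS_def X_def by auto
  from s2 obtain J' where J': "strictly_J_sign_symmetric n J' Y" unfolding SJS_def Y_def by auto
  from sjs_perron[OF X n J] obtain \<rho> x0 where
    rho: "\<rho> > 0" and x0: "x0 \<in> carrier_vec n" and x0s: "\<forall>i<n. x0 $ i * sgnJ J i > 0"
    and Xx0: "X *\<^sub>v x0 = \<rho> \<cdot>\<^sub>v x0"
    and Xc: "\<And>\<mu> z. z \<in> carrier_vec n \<Longrightarrow> z \<noteq> 0\<^sub>v n \<Longrightarrow> map_mat complex_of_real X *\<^sub>v z = \<mu> \<cdot>\<^sub>v z \<Longrightarrow>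
         cmod \<mu> \<le> \<rho> \<and> (cmod \<mu> = \<rho> \<longrightarrow> \<mu> = complex_of_real \<rho> \<and>
            (\<exists>a. z = a \<cdot>\<^sub>v map_vec complex_of_real x0))"
    and Xr: "\<And>q. q \<in> carrier_vec n \<Longrightarrow> X *\<^sub>v q = \<rho> \<cdot>\<^sub>v q \<Longrightarrow> \<exists>t. q = t \<cdot>\<^sub>v x0" by blast
  from sjs_perron[OF XT n sjs_transpose[OF J X]] obtain \<rho>' y0 where
    rho': "\<rho>' > 0" and y0: "y0 \<in> carrier_vec n" and y0s: "\<forall>i<n. y0 $ i * sgnJ J i > 0"
    and Xy0: "transpose_mat X *\<^sub>v y0 = \<rho>' \<cdot>\<^sub>v y0"
    and XTr: "\<And>q. q \<in> carrier_vec n \<Longrightarrow> transpose_mat X *\<^sub>v q = \<rho>' \<cdot>\<^sub>v q \<Longrightarrow> \<exists>t. q = t \<cdot>\<^sub>v y0" by blast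
  from sjs_perron[OF Y n J'] obtain \<rho>Q v0 where
    rhoQ: "\<rho>Q > 0" and v0: "v0 \<in> carrier_vec n" and v0s: "\<forall>i<n. v0 $ i * sgnJ J' i > 0"
    and Yv0: "Y *\<^sub>v v0 = \<rho>Q \<cdot>\<^sub>v v0"
    and Yc: "\<And>\<mu> z. z \<in> carrier_vec n \<Longrightarrow> z \<noteq> 0\<^sub>v n \<Longrightarrow> map_mat complex_of_real Y *\<^sub>v z = \<mu> \<cdot>\<^sub>v z \<Longrightarrow>
         cmod \<mu> \<le> \<rho>Q \<and> (cmod \<mu> = \<rho>Q \<longrightarrow> \<mu> = complex_of_real \<rho>Q \<and>
            (\<exists>a. z = a \<cdot>\<^sub>v map_vec complex_of_real v0))"
    and Yr: "\<And>q. q \<in> carrier_vec n \<Longrightarrow> Y *\<^sub>v q = \<rho>Q \<cdot>\<^sub>v q \<Longrightarrow> \<exists>t. q = t \<cdot>\<^sub>v v0" by blast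
  have nz: "w \<noteq> 0\<^sub>v n" if "\<forall>i<n. w $ i * sgnJ J'' i > 0" for w J''
  proof
    assume "w = 0\<^sub>v n" with that n show False by auto
  qed
  have x00: "x0 \<noteq> 0\<^sub>v n" using nz x0s by blast
  have y00: "y0 \<noteq> 0\<^sub>v n" using nz y0s by blast
  have v00: "v0 \<noteq> 0\<^sub>v n" using nz v0s by blast
  have XA: "X * A = A * X" unfolding X_def using pow_mat_commute[OF A] by simp
  have YA: "Y * A = A * Y" unfolding Y_def using pow_mat_commute[OF A, of "k+1"] by simp
  have YXA: "Y = X * A" unfolding X_def Y_def by simp
  have "X *\<^sub>v (A *\<^sub>v x0) = \<rho> \<cdot>\<^sub>v (A *\<^sub>v x0)"
  proof -
    have "X *\<^sub>v (A *\<^sub>v x0) = (X * A) *\<^sub>v x0" using assoc_mult_mat_vec[OF X A x0] by simp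
    also have "\<dots> = A *\<^sub>v (X *\<^sub>v x0)" unfolding XA using assoc_mult_mat_vec[OF A X x0] by simp
    also have "\<dots> = \<rho> \<cdot>\<^sub>v (A *\<^sub>v x0)" unfolding Xx0 using A x0 by (simp add: mult_mat_vec)
    finally show ?thesis .
  qed
  from Xr[OF _ this] A x0 obtain c where Ax0: "A *\<^sub>v x0 = c \<cdot>\<^sub>v x0" by auto
  have evx0: "eigenvector A x0 c" using Ax0 x0 x00 A unfolding eigenvector_def by auto
  have "X *\<^sub>v x0 = c ^ k \<cdot>\<^sub>v x0" unfolding X_def by (rule eigenvector_pow[OF A evx0])
  hence ck: "c ^ k = \<rho>" using Xx0 smult_vec_cancel[OF x0 x00] by metis
  have "Y *\<^sub>v (A *\<^sub>v v0) = \<rho>Q \<cdot>\<^sub>v (A *\<^sub>v v0)"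
  proof -
    have "Y *\<^sub>v (A *\<^sub>v v0) = (Y * A) *\<^sub>v v0" using assoc_mult_mat_vec[OF Y A v0] by simp
    also have "\<dots> = A *\<^sub>v (Y *\<^sub>v v0)" unfolding YA using assoc_mult_mat_vec[OF A Y v0] by simp
    also have "\<dots> = \<rho>Q \<cdot>\<^sub>v (A *\<^sub>v v0)" unfolding Yv0 using A v0 by (simp add: mult_mat_vec)
    finally show ?thesis .
  qed
  from Yr[OF _ this] A v0 obtain c' where Av0: "A *\<^sub>v v0 = c' \<cdot>\<^sub>v v0" by auto
  have evv0: "eigenvector A v0 c'" using Av0 v0 v00 A unfolding eigenvector_def by auto
  have "Y *\<^sub>v v0 = c' ^ (k+1) \<cdot>\<^sub>v v0" unfolding Y_def by (rule eigenvector_pow[OF A evv0])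
  hence c'k1: "c' ^ (k+1) = \<rho>Q" using Yv0 smult_vec_cancel[OF v0 v00] by metis
  have hom_ev: "map_mat complex_of_real B *\<^sub>v map_vec complex_of_real w = complex_of_real e \<cdot>\<^sub>v map_vec complex_of_real w"
    if "B \<in> carrier_mat n n" "w \<in> carrier_vec n" "B *\<^sub>v w = e \<cdot>\<^sub>v w" for B w e
    using of_real_hom.mult_mat_vec_hom[OF that(1,2), symmetric] that(3) by (simp add: of_real_hom.vec_hom_smult)
  have vc0: "map_vec complex_of_real w \<noteq> 0\<^sub>v n" "map_vec complex_of_real w \<in> carrier_vec n"
    if "w \<in> carrier_vec n" "w \<noteq> 0\<^sub>v n" for w :: "real vec"
    using that by (auto simp: vec_eq_iff)
  have "X *\<^sub>v v0 = c' ^ k \<cdot>\<^sub>v v0" unfolding X_def by (rule eigenvector_pow[OF A evv0])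
  from Xc[OF vc0(2)[OF v0 v00] vc0(1)[OF v0 v00] hom_ev[OF X v0 this]]
  have "\<bar>c'\<bar> ^ k \<le> \<rho>" by (simp add: norm_power power_abs)
  also have "\<rho> \<le> \<bar>c\<bar> ^ k" unfolding ck[symmetric] power_abs[symmetric] by (rule abs_ge_self)
  finally have ckk: "\<bar>c'\<bar> ^ k \<le> \<bar>c\<bar> ^ k" .
  obtain k' where k': "k = Suc k'" using k by (cases k) simp_all
  have c'c: "\<bar>c'\<bar> \<le> \<bar>c\<bar>" using ckk unfolding k'
    by (intro power_le_imp_le_base[of "\<bar>c'\<bar>" k' "\<bar>c\<bar>"]) simp_all
  have "Y *\<^sub>v x0 = c ^ (k+1) \<cdot>\<^sub>v x0" unfolding Y_def by (rule eigenvector_pow[OF A evx0])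
  from Yc[OF vc0(2)[OF x0 x00] vc0(1)[OF x0 x00] hom_ev[OF Y x0 this]]
  have Ycx0: "cmod (complex_of_real (c ^ (k+1))) \<le> \<rho>Q \<and> (cmod (complex_of_real (c ^ (k+1))) = \<rho>Q
      \<longrightarrow> complex_of_real (c ^ (k+1)) = complex_of_real \<rho>Q)" by blast
  have Ycx: "\<bar>c\<bar> ^ (k+1) \<le> \<rho>Q \<and> (\<bar>c\<bar> ^ (k+1) = \<rho>Q \<longrightarrow> c ^ (k+1) = \<rho>Q)"
    using Ycx0 unfolding norm_of_real of_real_eq_iff power_abs .
  have "\<rho>Q \<le> \<bar>c'\<bar> ^ (k+1)" unfolding c'k1[symmetric] power_abs[symmetric] by (rule abs_ge_self)
  also have "\<dots> \<le> \<bar>c\<bar> ^ (k+1)" by (rule power_mono[OF c'c], auto)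
  finally have "\<bar>c\<bar> ^ (k+1) = \<rho>Q" using Ycx by auto
  with Ycx have ck1: "c ^ (k+1) = \<rho>Q" by auto
  have c: "c > 0"
  proof -
    have "c * c ^ k = \<rho>Q" using ck1 by simp
    hence "c * \<rho> > 0" using ck rhoQ by simp
    thus ?thesis using rho by (simp add: zero_less_mult_iff)
  qed
  have sgsq: "sgnJ J i * sgnJ J i = 1" for i by (rule sgnJ_sq)
  have xy: "x0 $ i * y0 $ i > 0" if i: "i < n" for i
  proof -
    have "x0 $ i * y0 $ i = (x0 $ i * sgnJ J i) * (y0 $ i * sgnJ J i)"
      by (simp add: sgnJ_def)
    moreover have "(x0 $ i * sgnJ J i) * (y0 $ i * sgnJ J i) > 0"
      by (rule mult_pos_pos, insert x0s y0s i, auto)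
    ultimately show ?thesis by linarith
  qed
  have yx: "y0 \<bullet> x0 > 0" unfolding scalar_prod_def using x0 n xy
    by (intro sum_pos, auto simp: mult.commute)
  have "\<rho>' * (y0 \<bullet> x0) = \<rho> * (y0 \<bullet> x0)"
    using transpose_vec_mult_scalar[OF X x0 y0] unfolding Xy0 Xx0 using x0 y0 by simp
  hence rr: "\<rho>' = \<rho>" using yx by simp
  have AT: "transpose_mat A \<in> carrier_mat n n" using A by auto
  have "transpose_mat X *\<^sub>v (transpose_mat A *\<^sub>v y0) = \<rho> \<cdot>\<^sub>v (transpose_mat A *\<^sub>v y0)"
  proof -
    have "transpose_mat X *\<^sub>v (transpose_mat A *\<^sub>v y0) = (transpose_mat X * transpose_mat A) *\<^sub>v y0"
      using assoc_mult_mat_vec[OF XT AT y0] by simp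
    also have "transpose_mat X * transpose_mat A = transpose_mat (A * X)"
      using transpose_mult[OF A X] by simp
    also have "\<dots> = transpose_mat (X * A)" unfolding XA ..
    also have "\<dots> = transpose_mat A * transpose_mat X" using transpose_mult[OF X A] by simp
    also have "(transpose_mat A * transpose_mat X) *\<^sub>v y0 = transpose_mat A *\<^sub>v (transpose_mat X *\<^sub>v y0)"
      using assoc_mult_mat_vec[OF AT XT y0] by simp
    also have "\<dots> = \<rho> \<cdot>\<^sub>v (transpose_mat A *\<^sub>v y0)" unfolding Xy0 rr using AT y0 by (simp add: mult_mat_vec)
    finally show ?thesis .
  qed
  from XTr[OF _ this[folded rr]] AT y0 obtain c'' where Ay0: "transpose_mat A *\<^sub>v y0 = c'' \<cdot>\<^sub>v y0" by auto
  have "c'' * (y0 \<bullet> x0) = c * (y0 \<bullet> x0)"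
    using transpose_vec_mult_scalar[OF A x0 y0] unfolding Ay0 Ax0 using x0 y0 by simp
  hence "c'' = c" using yx by simp
  hence Ay0: "transpose_mat A *\<^sub>v y0 = c \<cdot>\<^sub>v y0" using Ay0 by simp
  define Ac where "Ac = map_mat complex_of_real A"
  define x0c where "x0c = map_vec complex_of_real x0"
  define y0c where "y0c = map_vec complex_of_real y0"
  have Ac: "Ac \<in> carrier_mat n n" unfolding Ac_def using A by auto
  have x0c: "x0c \<in> carrier_vec n" "x0c \<noteq> 0\<^sub>v n" unfolding x0c_def using vc0[OF x0 x00] by auto
  have y0c: "y0c \<in> carrier_vec n" unfolding y0c_def using y0 by auto
  have Acx0: "Ac *\<^sub>v x0c = complex_of_real c \<cdot>\<^sub>v x0c" unfolding Ac_def x0c_def by (rule hom_ev[OF A x0 Ax0])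
  have Acy0: "transpose_mat Ac *\<^sub>v y0c = complex_of_real c \<cdot>\<^sub>v y0c"
    unfolding Ac_def y0c_def map_mat_transpose by (rule hom_ev[OF AT y0 Ay0])
  have XAc: "map_mat complex_of_real X = Ac ^\<^sub>m k" unfolding X_def Ac_def by (rule of_real_hom.mat_hom_pow[OF A])
  have GS: "\<exists>a. v = a \<cdot>\<^sub>v x0c" if v: "v \<in> carrier_vec n" "Ac *\<^sub>v v = complex_of_real c \<cdot>\<^sub>v v" for v
  proof (cases "v = 0\<^sub>v n")
    case True then show ?thesis using x0c by (intro exI[of _ 0], auto)
  next
    case False
    have ev: "eigenvector Ac v (complex_of_real c)" using v False Ac unfolding eigenvector_def by auto
    have "map_mat complex_of_real X *\<^sub>v v = complex_of_real \<rho> \<cdot>\<^sub>v v"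
      unfolding XAc eigenvector_pow[OF Ac ev] ck[symmetric] by simp
    from Xc[OF v(1) False this] rho show ?thesis unfolding x0c_def by auto
  qed
  have evb: "cmod \<mu> < c" if ev: "eigenvalue Ac \<mu>" "\<mu> \<noteq> complex_of_real c" for \<mu>
  proof (rule ccontr)
    assume ge: "\<not> cmod \<mu> < c"
    from ev obtain v where evv: "eigenvector Ac v \<mu>" unfolding eigenvalue_def by auto
    hence v: "v \<in> carrier_vec n" "v \<noteq> 0\<^sub>v n" "Ac *\<^sub>v v = \<mu> \<cdot>\<^sub>v v" using Ac unfolding eigenvector_def by auto
    have "map_mat complex_of_real X *\<^sub>v v = \<mu> ^ k \<cdot>\<^sub>v v"
      unfolding XAc by (rule eigenvector_pow[OF Ac evv])
    from Xc[OF v(1,2) this] have le: "cmod (\<mu> ^ k) \<le> \<rho>"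
      and eq: "cmod (\<mu> ^ k) = \<rho> \<Longrightarrow> \<exists>a. v = a \<cdot>\<^sub>v x0c" unfolding x0c_def by auto
    have "\<rho> \<le> cmod \<mu> ^ k" unfolding ck[symmetric] using ge c by (intro power_mono, auto)
    with le have "cmod (\<mu> ^ k) = \<rho>" by (simp add: norm_power)
    from eq[OF this] obtain a where va: "v = a \<cdot>\<^sub>v x0c" by auto
    have "Ac *\<^sub>v v = complex_of_real c \<cdot>\<^sub>v v" unfolding va using mult_mat_vec[OF Ac x0c(1)] Acx0
      by (simp add: smult_smult_assoc mult.commute)
    with v(3) have "\<mu> \<cdot>\<^sub>v v = complex_of_real c \<cdot>\<^sub>v v" by simp
    from smult_vec_cancel[OF v(1,2) this] ev(2) show False by simp
  qed
  have ordc: "Polynomial.order (complex_of_real c) (char_poly Ac) = 1"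
  proof (rule geom_alg_simple[OF Ac x0c Acx0])
    fix z assume z: "z \<in> carrier_vec n"
      and hz: "Ac *\<^sub>v (Ac *\<^sub>v z - complex_of_real c \<cdot>\<^sub>v z) = complex_of_real c \<cdot>\<^sub>v (Ac *\<^sub>v z - complex_of_real c \<cdot>\<^sub>v z)"
    define t where "t = Ac *\<^sub>v z - complex_of_real c \<cdot>\<^sub>v z"
    have t: "t \<in> carrier_vec n" unfolding t_def using Ac z by auto
    from GS[OF t hz[folded t_def]] obtain a where ta: "t = a \<cdot>\<^sub>v x0c" by auto
    have "y0c \<bullet> t = y0c \<bullet> (Ac *\<^sub>v z) - y0c \<bullet> (complex_of_real c \<cdot>\<^sub>v z)"
      unfolding t_def by (rule scalar_prod_minus_distrib[OF y0c], insert Ac z, auto)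
    also have "y0c \<bullet> (Ac *\<^sub>v z) = (transpose_mat Ac *\<^sub>v y0c) \<bullet> z"
      using transpose_vec_mult_scalar[OF Ac z y0c] by simp
    also have "\<dots> = complex_of_real c * (y0c \<bullet> z)" unfolding Acy0 using y0c z by simp
    also have "y0c \<bullet> (complex_of_real c \<cdot>\<^sub>v z) = complex_of_real c * (y0c \<bullet> z)" using y0c z by simp
    finally have "y0c \<bullet> t = 0" by simp
    moreover have "y0c \<bullet> t = a * complex_of_real (y0 \<bullet> x0)"
      unfolding ta using y0c x0c y0 x0 unfolding y0c_def x0c_def
      by (simp add: scalar_prod_def sum_distrib_left mult.left_commute)
    ultimately have "a = 0" using yx by simp
    hence "t = 0\<^sub>v n" unfolding ta using x0c by auto
    hence "Ac *\<^sub>v z = complex_of_real c \<cdot>\<^sub>v z"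
      unfolding t_def using Ac z by (metis minus_cancel_vec mult_mat_vec_carrier smult_carrier_vec
          carrier_vecD right_minus_eq vec_eq_iff index_minus_vec(1) index_zero_vec(1))
    from GS[OF z this] show "\<exists>a. z = a \<cdot>\<^sub>v x0c" .
  qed
  have ord: "Polynomial.order c (char_poly A) = 1"
    using ordc unfolding Ac_def of_real_hom.char_poly_hom[OF A] order_of_real .
  have sg: "x0 $ i \<noteq> 0 \<and> y0 $ i \<noteq> 0 \<and> sgn (x0 $ i) = sgn (y0 $ i)" if i: "i < n" for i
    using xy[OF i] by (auto simp: zero_less_mult_iff sgn_if)
  show ?thesis unfolding signature_equality_def
  proof (intro exI[of _ c] conjI allI impI c ord)
    fix \<mu> assume "eigenvalue (map_mat complex_of_real A) \<mu> \<and> \<mu> \<noteq> complex_of_real c"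
    thus "cmod \<mu> < c" using evb unfolding Ac_def by auto
  next
    show "\<exists>x y. x \<in> carrier_vec n \<and> y \<in> carrier_vec n \<and> A *\<^sub>v x = c \<cdot>\<^sub>v x \<and>
        transpose_mat A *\<^sub>v y = c \<cdot>\<^sub>v y \<and> (\<forall>i<n. x $ i \<noteq> 0 \<and> y $ i \<noteq> 0 \<and> sgn (x $ i) = sgn (y $ i))"
      using x0 y0 Ax0 Ay0 sg by blast
  qed
qed
theorem theorem3:
  fixes A :: "real mat" and n :: nat
  assumes "A \<in> carrier_mat n n" and "n > 0"
  shows "(signature_equality n A \<longleftrightarrow> eventually_SJS n A) \<and>
         (eventually_SJS n A \<longleftrightarrow> (\<exists>k>0. SJS n (A ^\<^sub>m k) \<and> SJS n (A ^\<^sub>m (k+1))))"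
proof -
  have ev_two: "\<exists>k>0. SJS n (A ^\<^sub>m k) \<and> SJS n (A ^\<^sub>m (k+1))" if "eventually_SJS n A"
  proof -
    from that obtain k0 where k0: "k0 > 0" "\<And>k. k \<ge> k0 \<Longrightarrow> SJS n (A ^\<^sub>m k)"
      unfolding eventually_SJS_def by blast
    have "SJS n (A ^\<^sub>m k0)" by (rule k0(2), simp)
    moreover have "SJS n (A ^\<^sub>m (k0+1))" by (rule k0(2), simp)
    ultimately have "SJS n (A ^\<^sub>m k0) \<and> SJS n (A ^\<^sub>m (k0+1))" by blast
    with k0(1) show ?thesis by blast
  qed
  have two_se: "signature_equality n A" if "\<exists>k>0. SJS n (A ^\<^sub>m k) \<and> SJS n (A ^\<^sub>m (k+1))"
  proof -
    from that obtain k where "k > 0" "SJS n (A ^\<^sub>m k)" "SJS n (A ^\<^sub>m (k+1))" by blast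
    from two_sjs_imp_se[OF assms this] show ?thesis .
  qed
  have se_ev: "eventually_SJS n A" if "signature_equality n A" by (rule se_imp_ev[OF assms that])
  show ?thesis using ev_two two_se se_ev by blast
qed
end
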